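(* Let $F=L-N:X\to Y$ satisfy hypothesis (H), and suppose that for every $u\in X$ the limit $\lim_{t\to+\infty}PN(tu)/t=N_\infty(u)$ exists in $Y$. Then there exist $w_+,w_-\in H_X$ such that for every $z\in H_Y$, $$\lim_{t\to+\infty}\Big\|\frac{w(z,t)}{t}-w_+\Big\|_X=0,\qquad \lim_{t\to-\infty}\Big\|\frac{w(z,t)}{t}-w_-\Big\|_X=0,$$ and $w_+$, $w_-$ are respectively the unique solutions $w\in H_X$ of the equations $Lw-PN_\infty(w+\phi_p)=0$ and $Lw+PN_\infty(-w-\phi_p)=0$.
   Context: Let $X,Y$ be real Hilbert spaces, $X$ densely included in $Y$, and let $L:X\subset Y\to Y$ be a self-adjoint operator, $X$ carrying the graph norm. Let $\lambda_p$ be a simple isolated eigenvalue of $L$ with eigenvector $\phi_p\in X$, $\|\phi_p\|_Y=1$. Let $V_X=V_Y=\langle\phi_p\rangle$ be its real span, $H_Y=\{y\in Y:\langle y,\phi_p\rangle_Y=0\}$, $H_X=X\cap H_Y$, and $P:Y\to H_Y$ the orthogonal projection. Let $N:Y\to Y$, $F=L-N:X\to Y$, and for $t\in\mathbb{R}$ let $PN_t:H_Y\to H_Y$, $PN_t(w)=PN(w+t\phi_p)$, and $PF_t:H_X\to H_Y$, $PF_t(w)=PF(w+t\phi_p)$. Hypothesis (H): there is $n\ge0$ such that every $PN_t$ is Lipschitz with constant $n$ independent of $t$, and $[-n,n]\cap\sigma(L)=\{\lambda_p\}$. Under (H) each $PF_t$ is a homeomorphism; for $z\in H_Y$, $t\in\mathbb{R}$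 let $w(z,t)=(PF_t)^{-1}(z)$, so the fiber associated to $z$ is $\{w(z,t)+t\phi_p:t\in\mathbb{R}\}=F^{-1}(z+V_Y)$. *)

theory Defs
  imports "HOL-Analysis.Analysis"
begin

text \<open>The Hilbert space Y is a type of class real_inner and complete_space.
  The operator L is a function on Y considered only on its domain D (the space X).\<close>

definition linear_on :: "'a::real_vector set \<Rightarrow> ('a \<Rightarrow> 'a) \<Rightarrow> bool" where
  "linear_on D L \<longleftrightarrow> (\<forall>u\<in>D. \<forall>v\<in>D. \<forall>c::real.
      L (u + v) = L u + L v \<and> L (c *\<^sub>R u) = c *\<^sub>R L u)"

text \<open>Densely defined self-adjoint operator (L = L*): the domain of the adjoint is
  the set of v for which u \<mapsto> <Lu,v> is represented on D by some f, and equals D;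
  on D the adjoint agrees with L.\<close>
definition self_adjoint_op :: "'a::{real_inner,complete_space} set \<Rightarrow> ('a \<Rightarrow> 'a) \<Rightarrow> bool" where
  "self_adjoint_op D L \<longleftrightarrow>
     subspace D \<and> closure D = UNIV \<and> linear_on D L \<and>
     (\<forall>v. v \<in> D \<longleftrightarrow> (\<exists>f. \<forall>u\<in>D. inner (L u) v = inner u f)) \<and>
     (\<forall>u\<in>D. \<forall>v\<in>D. inner (L u) v = inner u (L v))"

definition graph_norm :: "('a::real_normed_vector \<Rightarrow> 'a) \<Rightarrow> 'a \<Rightarrow> real" where
  "graph_norm L u = sqrt ((norm u)\<^sup>2 + (norm (L u))\<^sup>2)"

definition op_spectrum :: "'a::real_normed_vector set \<Rightarrow> ('a \<Rightarrow> 'a) \<Rightarrow> real set" where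
  "op_spectrum D L = {mu. \<not> (bij_betw (\<lambda>u. L u - mu *\<^sub>R u) D UNIV \<and>
       (\<exists>C. \<forall>u\<in>D. norm u \<le> C * norm (L u - mu *\<^sub>R u)))}"

definition simple_isolated_eigen ::
  "'a::real_inner set \<Rightarrow> ('a \<Rightarrow> 'a) \<Rightarrow> real \<Rightarrow> 'a \<Rightarrow> bool" where
  "simple_isolated_eigen D L lam phi \<longleftrightarrow>
     phi \<in> D \<and> norm phi = 1 \<and> L phi = lam *\<^sub>R phi \<and>
     (\<forall>u\<in>D. L u = lam *\<^sub>R u \<longrightarrow> (\<exists>c. u = c *\<^sub>R phi)) \<and>
     (\<exists>e>0. op_spectrum D L \<inter> {lam - e <..< lam + e} = {lam})"

definition projH :: "'a::real_inner \<Rightarrow> 'a \<Rightarrow> 'a" where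
  "projH phi y = y - inner y phi *\<^sub>R phi"

definition HY :: "'a::real_inner \<Rightarrow> 'a set" where
  "HY phi = {y. inner y phi = 0}"

definition HX :: "'a::real_inner set \<Rightarrow> 'a \<Rightarrow> 'a set" where
  "HX D phi = D \<inter> HY phi"

definition hyp_H :: "'a::{real_inner,complete_space} set \<Rightarrow> ('a \<Rightarrow> 'a) \<Rightarrow> ('a \<Rightarrow> 'a)
    \<Rightarrow> real \<Rightarrow> 'a \<Rightarrow> bool" where
  "hyp_H D L N lam phi \<longleftrightarrow> (\<exists>n::real. n \<ge> 0 \<and>
     (\<forall>t::real. \<forall>w1\<in>HY phi. \<forall>w2\<in>HY phi.
        norm (projH phi (N (w1 + t *\<^sub>R phi)) - projH phi (N (w2 + t *\<^sub>R phi))) \<le> n * norm (w1 - w2)) \<and>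
     {-n..n} \<inter> op_spectrum D L = {lam})"

definition fiber_w :: "'a::real_inner set \<Rightarrow> ('a \<Rightarrow> 'a) \<Rightarrow> ('a \<Rightarrow> 'a) \<Rightarrow> 'a \<Rightarrow> 'a \<Rightarrow> real \<Rightarrow> 'a" where
  "fiber_w D L N phi z t = (THE w. w \<in> HX D phi \<and>
      projH phi (L (w + t *\<^sub>R phi) - N (w + t *\<^sub>R phi)) = z)"

end

theory Submission
  imports Defs
begin

lemma mono_disj:
  assumes "\<And>\<epsilon>. \<epsilon> > 0 \<Longrightarrow> P \<epsilon> \<or> Q \<epsilon>"
    and "\<And>\<epsilon> \<epsilon>'. P \<epsilon> \<Longrightarrow> \<epsilon> \<le> \<epsilon>' \<Longrightarrow> P \<epsilon>'" and "\<And>\<epsilon> \<epsilon>'. Q \<epsilon> \<Longrightarrow> \<epsilon> \<le> \<epsilon>' \<Longrightarrow> Q \<epsilon>'"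
  shows "(\<forall>\<epsilon>>0. P (\<epsilon>::real)) \<or> (\<forall>\<epsilon>>0. Q \<epsilon>)"
proof (rule ccontr)
  assume "\<not> ?thesis"
  then obtain e1 e2 where e: "e1 > 0" "\<not> P e1" "e2 > 0" "\<not> Q e2" by blast
  have "P (min e1 e2) \<or> Q (min e1 e2)" using assms(1) e by simp
  then show False using assms(2,3) e by (meson min.cobounded1 min.cobounded2)
qed

lemma norm_diff_sq: "norm (a - c *\<^sub>R b) ^ 2 = norm a ^ 2 - 2 * c * inner a b + c^2 * norm b ^ 2"
  for a b :: "'a::real_inner"
  unfolding power2_norm_eq_inner
  by (simp add: inner_diff_left inner_diff_right inner_commute power2_eq_square algebra_simps)

lemma extremal:
  fixes B :: "'a::real_inner \<Rightarrow> 'a" and S :: "'a set"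
  assumes Sadd: "\<And>x y. x\<in>S \<Longrightarrow> y\<in>S \<Longrightarrow> x + y \<in> S" and Sscale: "\<And>x c. x\<in>S \<Longrightarrow> c *\<^sub>R x \<in> S"
   and BS: "\<And>x. x\<in>S \<Longrightarrow> B x \<in> S"
   and Badd: "\<And>x y. x\<in>S \<Longrightarrow> y\<in>S \<Longrightarrow> B (x+y) = B x + B y"
   and Bscale: "\<And>x c. x\<in>S \<Longrightarrow> B (c *\<^sub>R x) = c *\<^sub>R B x"
   and Bsym: "\<And>x y. x\<in>S \<Longrightarrow> y\<in>S \<Longrightarrow> inner (B x) y = inner x (B y)"
   and Bbd: "\<And>x. x\<in>S \<Longrightarrow> norm (B x) \<le> K * norm x"
   and unit: "\<exists>x\<in>S. norm x = 1"
  shows "\<exists>M\<ge>0. (\<forall>x\<in>S. norm (B x) \<le> M * norm x) \<and>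
           (\<exists>d. \<bar>d\<bar> = M \<and> (\<forall>\<epsilon>>0. \<exists>x\<in>S. norm x = 1 \<and> norm (B x - d *\<^sub>R x) < \<epsilon>))"
proof -
  define A where "A = {norm (B x) | x. x \<in> S \<and> norm x = 1}"
  define M where "M = Sup A"
  obtain x0 where x0: "x0 \<in> S" "norm x0 = 1" using unit by blast
  have Ane: "A \<noteq> {}" using x0 unfolding A_def by blast
  have Abd: "bdd_above A" unfolding A_def bdd_above_def using Bbd by fastforce
  have M0: "M \<ge> 0"
  proof -
    have "norm (B x0) \<in> A" using x0 unfolding A_def by blast
    then have "norm (B x0) \<le> M" unfolding M_def using Abd by (rule cSup_upper)
    then show ?thesis using norm_ge_zero order_trans by blast
  qed
  have B0: "B 0 = 0" if "x \<in> S" for x using Bscale[OF that, of 0] by simp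
  have bound: "norm (B x) \<le> M * norm x" if x: "x \<in> S" for x
  proof (cases "x = 0")
    case True then show ?thesis using B0 x by simp
  next
    case False
    let ?u = "(1 / norm x) *\<^sub>R x"
    have u: "?u \<in> S" "norm ?u = 1" using Sscale[OF x] False by auto
    have "norm (B ?u) \<in> A" using u unfolding A_def by blast
    then have "norm (B ?u) \<le> M" unfolding M_def using Abd by (rule cSup_upper)
    moreover have "norm (B ?u) = norm (B x) / norm x" using Bscale[OF x] by simp
    ultimately show ?thesis using False by (simp add: divide_simps)
  qed
  have near: "\<exists>x\<in>S. norm x = 1 \<and> norm (B x) > M - \<delta>" if "\<delta> > 0" for \<delta>
  proof -
    have "M - \<delta> < Sup A" using that unfolding M_def by simp
    then obtain a where "a \<in> A" "M - \<delta> < a" using less_cSup_iff[OF Ane Abd] by blast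
    then show ?thesis unfolding A_def by blast
  qed
  have key: "\<exists>x\<in>S. norm x = 1 \<and> (norm (B x - M *\<^sub>R x) < \<epsilon> \<or> norm (B x - (- M) *\<^sub>R x) < \<epsilon>)"
    if e: "\<epsilon> > 0" for \<epsilon>
  proof (cases "M = 0")
    case True
    have "B x0 = 0" using bound[OF x0(1)] True by simp
    then show ?thesis using x0 e True by auto
  next
    case False
    then have Mp: "M > 0" using M0 by simp
    define \<delta> where "\<delta> = min M (\<epsilon>^4 / (2 * M^3 + 1))"
    have pos: "2 * M^3 + 1 > 0" using Mp by (simp add: add_pos_pos)
    then have dp: "\<delta> > 0" unfolding \<delta>_def using Mp e by simp
    obtain x where x: "x \<in> S" "norm x = 1" "norm (B x) > M - \<delta>" using near[OF dp] by blast
    have "M - \<delta> \<ge> 0" unfolding \<delta>_def by simp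
    then have "(M - \<delta>)^2 < norm (B x) ^ 2" using x(3) by (simp add: power_strict_mono)
    moreover have "(M - \<delta>)^2 = M^2 - 2*M*\<delta> + \<delta>^2" by (simp add: power2_eq_square algebra_simps)
    ultimately have mb: "M^2 - norm (B x)^2 < 2 * M * \<delta>" using zero_le_power2[of \<delta>] by linarith
    have Bx: "B x \<in> S" using BS[OF x(1)] .
    have BBx: "norm (B (B x)) \<le> M * norm (B x)" using bound[OF Bx] .
    then have BBx2: "norm (B (B x))^2 \<le> M^2 * norm (B x)^2"
      by (metis norm_ge_zero power_mono power_mult_distrib)
    have m4: "(M^2)^2 * norm x ^ 2 = M^4" using x(2) by (simp flip: power_mult)
    have "norm (B (B x) - (M^2) *\<^sub>R x)^2 = norm (B (B x))^2 - 2 * M^2 * inner (B (B x)) x + M^4"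
      using norm_diff_sq[of "B (B x)" "M^2" x] unfolding m4 .
    also have "inner (B (B x)) x = norm (B x)^2"
      using Bsym[OF Bx x(1)] by (simp add: power2_norm_eq_inner)
    finally have "norm (B (B x) - (M^2) *\<^sub>R x)^2 \<le> M^2 * (M^2 - norm (B x)^2)"
      using BBx2 by (simp add: algebra_simps power2_eq_square power4_eq_xxxx)
    also have "\<dots> \<le> M^2 * (2 * M * \<delta>)" using mb Mp by (intro mult_left_mono) auto
    also have "\<dots> = 2 * M^3 * \<delta>" by (simp add: power2_eq_square power3_eq_cube)
    also have "\<dots> \<le> 2 * M^3 * (\<epsilon>^4 / (2 * M^3 + 1))" unfolding \<delta>_def using Mp by (intro mult_left_mono) auto
    also have "\<dots> < \<epsilon>^4" using Mp e pos by (simp add: divide_simps)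
    finally have "norm (B (B x) - (M^2) *\<^sub>R x)^2 < (\<epsilon>^2)^2" by (simp add: power_mult[symmetric])
    then have small: "norm (B (B x) - (M^2) *\<^sub>R x) < \<epsilon>^2"
      using power2_less_imp_less by fastforce
    define w where "w = B x + M *\<^sub>R x"
    have w: "w \<in> S" unfolding w_def using Sadd Sscale Bx x(1) by blast
    have Bw: "B w - M *\<^sub>R w = B (B x) - (M^2) *\<^sub>R x"
      unfolding w_def using Badd[OF Bx Sscale[OF x(1)]] Bscale[OF x(1)]
      by (simp add: algebra_simps power2_eq_square)
    show ?thesis
    proof (cases "norm w < \<epsilon>")
      case True
      then show ?thesis using x unfolding w_def by auto
    next
      case False
      then have wp: "norm w > 0" using e by linarith
      let ?v = "(1 / norm w) *\<^sub>R w"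
      have v: "?v \<in> S" "norm ?v = 1" using Sscale[OF w] wp by auto
      have pv: "B ?v - M *\<^sub>R ?v = (1 / norm w) *\<^sub>R (B w - M *\<^sub>R w)"
        using Bscale[OF w] by (simp add: algebra_simps)
      have "norm (B ?v - M *\<^sub>R ?v) = norm ((1 / norm w) *\<^sub>R (B w - M *\<^sub>R w))" by (simp only: pv)
      also have "\<dots> = norm (B w - M *\<^sub>R w) / norm w" using wp by simp
      also have "\<dots> = norm (B (B x) - (M^2) *\<^sub>R x) / norm w" by (simp only: Bw)
      also have "\<dots> \<le> norm (B (B x) - (M^2) *\<^sub>R x) / \<epsilon>"
        using False e wp by (intro divide_left_mono) auto
      also have "\<dots> < \<epsilon>^2 / \<epsilon>" using small e by (rule divide_strict_right_mono)
      also have "\<dots> = \<epsilon>" by (simp add: power2_eq_square)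
      finally show ?thesis using v by blast
    qed
  qed
  define P where "P \<epsilon> \<longleftrightarrow> (\<exists>x\<in>S. norm x = 1 \<and> norm (B x - M *\<^sub>R x) < \<epsilon>)" for \<epsilon>
  define Q where "Q \<epsilon> \<longleftrightarrow> (\<exists>x\<in>S. norm x = 1 \<and> norm (B x - (- M) *\<^sub>R x) < \<epsilon>)" for \<epsilon>
  have "(\<forall>\<epsilon>>0. P \<epsilon>) \<or> (\<forall>\<epsilon>>0. Q \<epsilon>)"
  proof (rule mono_disj)
    show "P \<epsilon> \<or> Q \<epsilon>" if "\<epsilon> > 0" for \<epsilon> using key[OF that] unfolding P_def Q_def by blast
    show "P e'" if "P e" "e \<le> e'" for e e' using that unfolding P_def by force
    show "Q e'" if "Q e" "e \<le> e'" for e e' using that unfolding Q_def by force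
  qed
  then show ?thesis unfolding P_def Q_def using M0 bound
    by (metis abs_minus_cancel abs_of_nonneg)
qed


locale SA =
  fixes D :: "'a::{real_inner,complete_space} set" and L :: "'a \<Rightarrow> 'a"
  assumes sa: "self_adjoint_op D L"
begin

lemma subsp: "subspace D" using sa unfolding self_adjoint_op_def by auto
lemma dense: "closure D = UNIV" using sa unfolding self_adjoint_op_def by auto
lemma D0: "0 \<in> D" using subsp by (simp add: subspace_0)
lemma Dadd: "u \<in> D \<Longrightarrow> v \<in> D \<Longrightarrow> u + v \<in> D" using subsp by (simp add: subspace_add)
lemma Dscale: "u \<in> D \<Longrightarrow> c *\<^sub>R u \<in> D" using subsp by (simp add: subspace_scale)
lemma Ddiff: "u \<in> D \<Longrightarrow> v \<in> D \<Longrightarrow> u - v \<in> D" using subsp by (simp add: subspace_diff)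
lemma Dneg: "u \<in> D \<Longrightarrow> - u \<in> D" using subsp by (simp add: subspace_neg)
lemma lin: "linear_on D L" using sa unfolding self_adjoint_op_def by auto
lemma Ladd: "u \<in> D \<Longrightarrow> v \<in> D \<Longrightarrow> L (u + v) = L u + L v"
  using lin[unfolded linear_on_def, rule_format, of u v 0] by simp
lemma Lscale: "u \<in> D \<Longrightarrow> L (c *\<^sub>R u) = c *\<^sub>R L u"
  using lin[unfolded linear_on_def, rule_format, of u u c] by simp
lemma L0: "L 0 = 0" using Lscale[OF D0, of 0] by simp
lemma Lneg: assumes "u \<in> D" shows "L (- u) = - L u"
proof -
  have "L ((-1) *\<^sub>R u) = (-1) *\<^sub>R L u" by (rule Lscale[OF assms])
  then show ?thesis by simp
qed
lemma Ldiff: assumes "u \<in> D" "v \<in> D" shows "L (u - v) = L u - L v"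
proof -
  have "L (u + (- v)) = L u + L (-v)" by (rule Ladd[OF assms(1) Dneg[OF assms(2)]])
  then show ?thesis using Lneg[OF assms(2)] by simp
qed
lemma symall: "\<forall>u\<in>D. \<forall>v\<in>D. inner (L u) v = inner u (L v)"
  using sa unfolding self_adjoint_op_def by (elim conjE)
lemma adjall: "\<forall>v. v \<in> D \<longleftrightarrow> (\<exists>f. \<forall>u\<in>D. inner (L u) v = inner u f)"
  using sa unfolding self_adjoint_op_def by (elim conjE)
lemma Lsym: "u \<in> D \<Longrightarrow> v \<in> D \<Longrightarrow> inner (L u) v = inner u (L v)"
  by (rule symall[rule_format])
lemma adj: assumes "\<And>u. u \<in> D \<Longrightarrow> inner (L u) v = inner u f" shows "v \<in> D"
proof -
  have "\<exists>f. \<forall>u\<in>D. inner (L u) v = inner u f" using assms by blast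
  then show ?thesis using adjall by (rule_tac iffD2[OF spec[OF adjall]])
qed

lemma perpD: assumes "\<And>u. u \<in> D \<Longrightarrow> inner u v = 0" shows "v = 0"
proof -
  have "closed {x. inner x v = 0}" by (intro closed_Collect_eq continuous_intros)
  moreover have "D \<subseteq> {x. inner x v = 0}" using assms by auto
  ultimately have "closure D \<subseteq> {x. inner x v = 0}" by (simp add: closure_minimal)
  then have "v \<in> {x. inner x v = 0}" using dense by (metis UNIV_I subsetD)
  then have "inner v v = 0" by simp
  then show ?thesis by simp
qed

lemma closedL:
  assumes x: "\<And>k. x k \<in> D" and lx: "x \<longlonglongrightarrow> xl" and ly: "(\<lambda>k. L (x k)) \<longlonglongrightarrow> y"
  shows "xl \<in> D \<and> L xl = y"
proof -
  have eq: "inner (L u) xl = inner u y" if u: "u \<in> D" for u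
  proof -
    have "(\<lambda>k. inner (L u) (x k)) \<longlonglongrightarrow> inner (L u) xl" by (intro tendsto_intros lx)
    moreover have "(\<lambda>k. inner (L u) (x k)) = (\<lambda>k. inner u (L (x k)))" using Lsym[OF u x] by auto
    moreover have "(\<lambda>k. inner u (L (x k))) \<longlonglongrightarrow> inner u y" by (intro tendsto_intros ly)
    ultimately show ?thesis using LIMSEQ_unique by metis
  qed
  have xD: "xl \<in> D" by (rule adj[OF eq])
  have "inner u (L xl - y) = 0" if "u \<in> D" for u
    using eq[OF that] Lsym[OF that xD] by (simp add: inner_diff_right)
  then have "L xl - y = 0" by (rule perpD)
  then show ?thesis using xD by simp
qed


lemma Lcomb: "u \<in> D \<Longrightarrow> v \<in> D \<Longrightarrow> L (a *\<^sub>R u + b *\<^sub>R v) = a *\<^sub>R L u + b *\<^sub>R L v"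
  using Ladd[OF Dscale Dscale] Lscale by simp

definition Res :: "real \<Rightarrow> 'a \<Rightarrow> 'a" where
  "Res \<mu> y = (THE x. x \<in> D \<and> L x - \<mu> *\<^sub>R x = y)"

lemma notsp: assumes "\<mu> \<notin> op_spectrum D L"
  shows "bij_betw (\<lambda>u. L u - \<mu> *\<^sub>R u) D UNIV" "\<exists>C. \<forall>u\<in>D. norm u \<le> C * norm (L u - \<mu> *\<^sub>R u)"
  using assms unfolding op_spectrum_def by auto

lemma Res_ex1: assumes "\<mu> \<notin> op_spectrum D L" shows "\<exists>!x. x \<in> D \<and> L x - \<mu> *\<^sub>R x = y"
proof -
  have b: "bij_betw (\<lambda>u. L u - \<mu> *\<^sub>R u) D UNIV" using notsp[OF assms] by simp
  then have "y \<in> (\<lambda>u. L u - \<mu> *\<^sub>R u) ` D" unfolding bij_betw_def by simp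
  then obtain x where "x \<in> D" "L x - \<mu> *\<^sub>R x = y" by (elim imageE) simp
  moreover have "x' = x" if "x' \<in> D" "L x' - \<mu> *\<^sub>R x' = y" for x'
    using b that \<open>x \<in> D\<close> \<open>L x - \<mu> *\<^sub>R x = y\<close> unfolding bij_betw_def inj_on_def by metis
  ultimately show ?thesis by blast
qed

lemma Res_D: "\<mu> \<notin> op_spectrum D L \<Longrightarrow> Res \<mu> y \<in> D"
  using theI'[OF Res_ex1] unfolding Res_def by blast
lemma Res_eq: "\<mu> \<notin> op_spectrum D L \<Longrightarrow> L (Res \<mu> y) - \<mu> *\<^sub>R Res \<mu> y = y"
  using theI'[OF Res_ex1] unfolding Res_def by blast
lemma Res_uniq: assumes "\<mu> \<notin> op_spectrum D L" "x \<in> D" "L x - \<mu> *\<^sub>R x = y" shows "Res \<mu> y = x"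
  using the1_equality[OF Res_ex1[OF assms(1)]] assms(2,3) unfolding Res_def by blast
lemma Res_inv: "\<mu> \<notin> op_spectrum D L \<Longrightarrow> x \<in> D \<Longrightarrow> Res \<mu> (L x - \<mu> *\<^sub>R x) = x"
  using Res_uniq by blast

lemma Res_comb: assumes "\<mu> \<notin> op_spectrum D L"
  shows "Res \<mu> (a *\<^sub>R x + b *\<^sub>R y) = a *\<^sub>R Res \<mu> x + b *\<^sub>R Res \<mu> y"
proof (rule Res_uniq[OF assms])
  show "a *\<^sub>R Res \<mu> x + b *\<^sub>R Res \<mu> y \<in> D" using Res_D[OF assms] Dadd Dscale by blast
  have "L (a *\<^sub>R Res \<mu> x + b *\<^sub>R Res \<mu> y) = a *\<^sub>R L (Res \<mu> x) + b *\<^sub>R L (Res \<mu> y)"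
    using Lcomb Res_D[OF assms] by blast
  then show "L (a *\<^sub>R Res \<mu> x + b *\<^sub>R Res \<mu> y) - \<mu> *\<^sub>R (a *\<^sub>R Res \<mu> x + b *\<^sub>R Res \<mu> y) = a *\<^sub>R x + b *\<^sub>R y"
    using Res_eq[OF assms, of x] Res_eq[OF assms, of y] by (simp add: algebra_simps)
qed

lemma Res_add: "\<mu> \<notin> op_spectrum D L \<Longrightarrow> Res \<mu> (x + y) = Res \<mu> x + Res \<mu> y"
  using Res_comb[of \<mu> 1 x 1 y] by simp
lemma Res_scale: "\<mu> \<notin> op_spectrum D L \<Longrightarrow> Res \<mu> (a *\<^sub>R x) = a *\<^sub>R Res \<mu> x"
  using Res_comb[of \<mu> a x 0 x] by simp
lemma Res_diff: "\<mu> \<notin> op_spectrum D L \<Longrightarrow> Res \<mu> (x - y) = Res \<mu> x - Res \<mu> y"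
  using Res_comb[of \<mu> 1 x "-1" y] by simp

lemma Res_bound: assumes "\<mu> \<notin> op_spectrum D L" shows "\<exists>C>0. \<forall>y. norm (Res \<mu> y) \<le> C * norm y"
proof -
  obtain C where C: "\<forall>u\<in>D. norm u \<le> C * norm (L u - \<mu> *\<^sub>R u)" using notsp(2)[OF assms] by blast
  have "norm (Res \<mu> y) \<le> max C 1 * norm y" for y
  proof -
    have "norm (Res \<mu> y) \<le> C * norm y" using C Res_D[OF assms] Res_eq[OF assms] by metis
    also have "\<dots> \<le> max C 1 * norm y" by (simp add: mult_right_mono)
    finally show ?thesis .
  qed
  then show ?thesis by (intro exI[of _ "max C 1"]) auto
qed

lemma Res_sym: assumes "\<mu> \<notin> op_spectrum D L" shows "inner (Res \<mu> x) y = inner x (Res \<mu> y)"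
proof -
  let ?u = "Res \<mu> x" and ?v = "Res \<mu> y"
  have u: "?u \<in> D" and v: "?v \<in> D" using Res_D[OF assms] by auto
  have "inner ?u y = inner ?u (L ?v - \<mu> *\<^sub>R ?v)" using Res_eq[OF assms, of y] by simp
  also have "\<dots> = inner (L ?u) ?v - \<mu> * inner ?u ?v" using Lsym[OF u v] by (simp add: inner_diff_right)
  also have "\<dots> = inner (L ?u - \<mu> *\<^sub>R ?u) ?v" by (simp add: inner_diff_left)
  also have "\<dots> = inner x ?v" using Res_eq[OF assms, of x] by simp
  finally show ?thesis .
qed

lemma Res_ident: assumes a: "a \<notin> op_spectrum D L" and b: "b \<notin> op_spectrum D L"
  shows "Res a y - Res b y = (a - b) *\<^sub>R Res a (Res b y)"
proof -
  let ?w = "Res b y"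
  have w: "?w \<in> D" using Res_D[OF b] .
  have "y = (L ?w - a *\<^sub>R ?w) + (a - b) *\<^sub>R ?w" using Res_eq[OF b, of y] by (simp add: algebra_simps)
  then have "Res a y = Res a (L ?w - a *\<^sub>R ?w) + Res a ((a - b) *\<^sub>R ?w)" using Res_add[OF a] by metis
  also have "\<dots> = ?w + (a - b) *\<^sub>R Res a ?w" using Res_inv[OF a w] Res_scale[OF a] by simp
  finally show ?thesis by simp
qed

lemma Res_comm: assumes a: "a \<notin> op_spectrum D L" and b: "b \<notin> op_spectrum D L"
  shows "Res a (Res b y) = Res b (Res a y)"
proof (cases "a = b")
  case False
  have "(a - b) *\<^sub>R Res a (Res b y) = (a - b) *\<^sub>R Res b (Res a y)"
    using Res_ident[OF a b, of y] Res_ident[OF b a, of y]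
    by (metis minus_diff_eq scaleR_minus_left)
  then show ?thesis using False by simp
qed simp


definition appr :: "'a set \<Rightarrow> real \<Rightarrow> bool" where
  "appr S \<mu> \<longleftrightarrow> (\<forall>\<delta>>0. \<exists>x. x \<in> D \<and> x \<in> S \<and> norm x = 1 \<and> norm (L x - \<mu> *\<^sub>R x) < \<delta>)"

lemma appr_sp: assumes "appr S \<mu>" shows "\<mu> \<in> op_spectrum D L"
proof (rule ccontr)
  assume "\<mu> \<notin> op_spectrum D L"
  then obtain C where C: "\<forall>u\<in>D. norm u \<le> C * norm (L u - \<mu> *\<^sub>R u)" using notsp(2) by blast
  have "(0::real) < 1 / (\<bar>C\<bar> + 1)" by simp
  then obtain x where x: "x \<in> D" "norm x = 1" "norm (L x - \<mu> *\<^sub>R x) < 1 / (\<bar>C\<bar> + 1)"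
    using assms unfolding appr_def by blast
  have "1 \<le> C * norm (L x - \<mu> *\<^sub>R x)" using C x by metis
  also have "\<dots> \<le> \<bar>C\<bar> * norm (L x - \<mu> *\<^sub>R x)" by (simp add: mult_right_mono)
  also have "\<dots> \<le> \<bar>C\<bar> * (1 / (\<bar>C\<bar> + 1))" by (rule mult_left_mono[OF less_imp_le[OF x(3)] abs_ge_zero])
  also have "\<dots> < 1" by (simp add: field_simps)
  finally show False by simp
qed

end

locale SAE = SA +
  fixes lam :: real and phi :: 'a
  assumes eig: "simple_isolated_eigen D L lam phi"
begin

lemma phiD: "phi \<in> D" and phin: "norm phi = 1" and Lphi: "L phi = lam *\<^sub>R phi"
  and ker: "\<And>u. u \<in> D \<Longrightarrow> L u = lam *\<^sub>R u \<Longrightarrow> \<exists>c. u = c *\<^sub>R phi"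
  and iso: "\<exists>e>0. op_spectrum D L \<inter> {lam - e <..< lam + e} = {lam}"
  using eig unfolding simple_isolated_eigen_def by auto

lemma phii: "inner phi phi = 1" using phin by (simp add: norm_eq_sqrt_inner)

lemma HY_closed: "closed (HY phi)" unfolding HY_def by (intro closed_Collect_eq continuous_intros)
lemma HY0: "0 \<in> HY phi" unfolding HY_def by simp
lemma HYcomb: "x \<in> HY phi \<Longrightarrow> y \<in> HY phi \<Longrightarrow> a *\<^sub>R x + b *\<^sub>R y \<in> HY phi"
  unfolding HY_def by (simp add: inner_add_left)
lemma HYadd: "x \<in> HY phi \<Longrightarrow> y \<in> HY phi \<Longrightarrow> x + y \<in> HY phi"
  unfolding HY_def by (simp add: inner_add_left)
lemma HYdiff: "x \<in> HY phi \<Longrightarrow> y \<in> HY phi \<Longrightarrow> x - y \<in> HY phi"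
  unfolding HY_def by (simp add: inner_diff_left)
lemma HYscale: "x \<in> HY phi \<Longrightarrow> a *\<^sub>R x \<in> HY phi"
  unfolding HY_def by simp
lemma HYneg: "x \<in> HY phi \<Longrightarrow> - x \<in> HY phi"
  unfolding HY_def by simp
lemma HX_iff: "x \<in> HX D phi \<longleftrightarrow> x \<in> D \<and> x \<in> HY phi" unfolding HX_def by simp

lemma projH_HY: "projH phi y \<in> HY phi" unfolding HY_def projH_def using phii by (simp add: inner_diff_left)
lemma projH_id: "y \<in> HY phi \<Longrightarrow> projH phi y = y" unfolding HY_def projH_def by simp
lemma projH_phi: "projH phi (c *\<^sub>R phi) = 0" unfolding projH_def using phii by simp
lemma projH_add: "projH phi (x + y) = projH phi x + projH phi y"
  unfolding projH_def by (simp add: inner_add_left algebra_simps)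
lemma projH_scale: "projH phi (c *\<^sub>R x) = c *\<^sub>R projH phi x"
  unfolding projH_def by (simp add: algebra_simps)
lemma projH_neg: "projH phi (- x) = - projH phi x"
  unfolding projH_def by (simp add: algebra_simps)
lemma projH_diff: "projH phi (x - y) = projH phi x - projH phi y"
  unfolding projH_def by (simp add: inner_diff_left algebra_simps)
lemma projH_norm: "norm (projH phi x) \<le> norm x"
proof -
  have "norm x ^ 2 = norm (projH phi x) ^ 2 + (inner x phi)^2"
    unfolding projH_def power2_norm_eq_inner using phii
    by (simp add: inner_diff_left inner_diff_right inner_commute power2_eq_square algebra_simps)
  then have "norm (projH phi x) ^ 2 \<le> norm x ^ 2" by simp
  then show ?thesis using power2_le_imp_le norm_ge_zero by blast
qed

lemma L_HY: assumes "u \<in> D" "u \<in> HY phi" shows "L u \<in> HY phi"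
  using Lsym[OF assms(1) phiD] assms(2) Lphi unfolding HY_def by simp

lemma lam_sp: "lam \<in> op_spectrum D L"
proof -
  have "\<not> inj_on (\<lambda>u. L u - lam *\<^sub>R u) D"
  proof
    assume "inj_on (\<lambda>u. L u - lam *\<^sub>R u) D"
    moreover have "L phi - lam *\<^sub>R phi = L 0 - lam *\<^sub>R 0" using Lphi L0 by simp
    ultimately have "phi = 0" using phiD D0 unfolding inj_on_def by blast
    then show False using phin by simp
  qed
  then show ?thesis unfolding op_spectrum_def bij_betw_def by blast
qed

lemma Res_phi: assumes "\<mu> \<notin> op_spectrum D L" shows "Res \<mu> phi = (1 / (lam - \<mu>)) *\<^sub>R phi"
proof -
  have ne: "lam \<noteq> \<mu>" using assms lam_sp by auto
  show ?thesis
  proof (rule Res_uniq[OF assms])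
    show "(1 / (lam - \<mu>)) *\<^sub>R phi \<in> D" using phiD Dscale by blast
    show "L ((1 / (lam - \<mu>)) *\<^sub>R phi) - \<mu> *\<^sub>R (1 / (lam - \<mu>)) *\<^sub>R phi = phi"
    proof -
      have "L ((1 / (lam - \<mu>)) *\<^sub>R phi) - \<mu> *\<^sub>R (1 / (lam - \<mu>)) *\<^sub>R phi
          = ((1 / (lam - \<mu>)) * lam - \<mu> * (1 / (lam - \<mu>))) *\<^sub>R phi"
        by (simp only: Lscale[OF phiD] Lphi scaleR_scaleR scaleR_diff_left)
      also have "(1 / (lam - \<mu>)) * lam - \<mu> * (1 / (lam - \<mu>)) = (1 / (lam - \<mu>)) * (lam - \<mu>)"
        by (simp add: right_diff_distrib)
      also have "\<dots> = 1" using ne by simp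
      finally show ?thesis by simp
    qed
  qed
qed

lemma Res_HY: assumes "\<mu> \<notin> op_spectrum D L" "y \<in> HY phi" shows "Res \<mu> y \<in> HY phi"
  using Res_sym[OF assms(1), of y phi] Res_phi[OF assms(1)] assms(2) unfolding HY_def by simp

end

context SAE
begin

definition ee :: real where
  "ee = (SOME e. e > 0 \<and> op_spectrum D L \<inter> {lam - e <..< lam + e} = {lam})"

lemma ee: "ee > 0" "op_spectrum D L \<inter> {lam - ee <..< lam + ee} = {lam}"
  using someI_ex[OF iso] unfolding ee_def by auto

lemma ee_iso: assumes "\<mu> \<in> op_spectrum D L" "\<bar>\<mu> - lam\<bar> < ee" shows "\<mu> = lam"
proof -
  have "\<mu> \<in> {lam - ee <..< lam + ee}" using assms(2) by (simp add: abs_less_iff)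
  then have "\<mu> \<in> op_spectrum D L \<inter> {lam - ee <..< lam + ee}" using assms(1) by blast
  then show ?thesis unfolding ee(2) by blast
qed

lemma ee_res: assumes "0 < \<bar>\<mu> - lam\<bar>" "\<bar>\<mu> - lam\<bar> < ee" shows "\<mu> \<notin> op_spectrum D L"
proof
  assume "\<mu> \<in> op_spectrum D L"
  then have "\<mu> = lam" using ee_iso assms(2) by blast
  then show False using assms(1) by simp
qed

lemma witness:
  assumes "x \<in> D" "x \<noteq> 0" "norm (L x - \<mu> *\<^sub>R x) < \<delta> * norm x"
  shows "\<exists>u. u \<in> D \<and> norm u = 1 \<and> norm (L u - \<mu> *\<^sub>R u) < \<delta>"
proof -
  let ?u = "(1 / norm x) *\<^sub>R x"
  have "L ?u - \<mu> *\<^sub>R ?u = (1 / norm x) *\<^sub>R (L x - \<mu> *\<^sub>R x)"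
    using Lscale[OF assms(1)] by (simp add: algebra_simps)
  then have "norm (L ?u - \<mu> *\<^sub>R ?u) = norm (L x - \<mu> *\<^sub>R x) / norm x" by simp
  also have "\<dots> < \<delta>" using assms(2,3) by (simp add: divide_simps)
  finally show ?thesis using Dscale[OF assms(1)] assms(2) by (intro exI[of _ ?u]) simp
qed

definition Dop :: "real \<Rightarrow> real \<Rightarrow> 'a \<Rightarrow> 'a" where
  "Dop s t y = Res (lam + t) y + s *\<^sub>R Res (lam + t) (Res (lam + s) y)"

lemma Dx_facts:
  fixes x :: 'a
  assumes a: "lam + s \<notin> op_spectrum D L" and b: "lam + t \<notin> op_spectrum D L"
  defines "v \<equiv> Res (lam + s) x" and "w \<equiv> Res (lam + t) (Res (lam + s) x)"
  shows "v \<in> D" "w \<in> D" "L v - (lam + s) *\<^sub>R v = x" "L w - (lam + t) *\<^sub>R w = v"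
    "Dop s t x = v + t *\<^sub>R w"
proof -
  show "v \<in> D" "L v - (lam + s) *\<^sub>R v = x" unfolding v_def using Res_D[OF a] Res_eq[OF a] by auto
  show "w \<in> D" "L w - (lam + t) *\<^sub>R w = v" unfolding w_def v_def using Res_D[OF b] Res_eq[OF b] by auto
  have "Res (lam + t) x - Res (lam + s) x = ((lam + t) - (lam + s)) *\<^sub>R Res (lam + t) (Res (lam + s) x)"
    by (rule Res_ident[OF b a])
  then have "Res (lam + t) x = v + (t - s) *\<^sub>R w" unfolding v_def w_def by (simp add: algebra_simps)
  then show "Dop s t x = v + t *\<^sub>R w" unfolding Dop_def w_def[symmetric] by (simp add: algebra_simps)
qed


lemma real_case:
  assumes a: "lam + s \<notin> op_spectrum D L" and b: "lam + t \<notin> op_spectrum D L"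
    and sp: "s > 0" "t > 0" and d0: "d \<noteq> 0"
    and Dl: "0 \<le> d^2 * (s - t)^2 + 2 * d * (s + t) + 1"
    and ap: "\<forall>\<epsilon>>0. \<exists>x. norm x = 1 \<and> norm (Dop s t x - d *\<^sub>R x) < \<epsilon>"
  shows "\<exists>r. r \<noteq> 0 \<and> d * (r - s) * (r - t) = r \<and> appr UNIV (lam + r)"
proof -
  define \<Delta> where "\<Delta> = d^2 * (s - t)^2 + 2 * d * (s + t) + 1"
  define q where "q = d * (s + t) + 1"
  define S where "S = sqrt \<Delta>"
  define r1 where "r1 = (q + S) / (2 * d)"
  define r2 where "r2 = (q - S) / (2 * d)"
  have sq: "S^2 = \<Delta>" unfolding S_def \<Delta>_def using Dl by simp
  have sum: "r1 + r2 = s + t + 1 / d" unfolding r1_def r2_def q_def using d0 by (simp add: field_simps)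
  have "r1 * r2 = ((q + S) * (q - S)) / ((2 * d) * (2 * d))" unfolding r1_def r2_def by simp
  also have "(q + S) * (q - S) = q^2 - \<Delta>" using sq by (simp add: algebra_simps power2_eq_square)
  also have "q^2 - \<Delta> = (2 * d) * (2 * d) * (s * t)" unfolding q_def \<Delta>_def by (simp add: power2_eq_square algebra_simps)
  finally have prod: "r1 * r2 = s * t" using d0 by simp
  have root: "d * (r - s) * (r - t) = r" if "r = r1 \<or> r = r2" for r
  proof -
    have "d * (r - s) * (r - t) = d * r * (r1 + r2 - s - t) + d * (s * t - r1 * r2)"
      using that by (auto simp: algebra_simps power2_eq_square)
    also have "\<dots> = r" using sum prod d0 by simp
    finally show ?thesis .
  qed
  have stp: "s * t > 0" using sp by simp
  have r1n: "r1 \<noteq> 0" and r2n: "r2 \<noteq> 0" using prod stp by auto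
  define P where "P \<delta> \<longleftrightarrow> (\<exists>u. u \<in> D \<and> u \<in> UNIV \<and> norm u = 1 \<and> norm (L u - (lam + r1) *\<^sub>R u) < \<delta>)" for \<delta>
  define Q where "Q \<delta> \<longleftrightarrow> (\<exists>u. u \<in> D \<and> u \<in> UNIV \<and> norm u = 1 \<and> norm (L u - (lam + r2) *\<^sub>R u) < \<delta>)" for \<delta>
  have PQ: "P \<delta> \<or> Q \<delta>" if dp: "\<delta> > 0" for \<delta>
  proof -
    define R2 where "R2 = \<bar>r2\<bar> + 1"
    have R2p: "R2 > 0" unfolding R2_def by simp
    have dap: "\<bar>d\<bar> > 0" using d0 by simp
    define \<eta> where "\<eta> = min (\<bar>d\<bar> / 4) (\<delta> * \<bar>d\<bar> / (4 * R2))"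
    define \<epsilon> where "\<epsilon> = min (\<bar>d\<bar> / 4) (\<delta> * \<bar>d\<bar> * \<eta> / 2)"
    have etap: "\<eta> > 0" unfolding \<eta>_def using dap dp R2p by simp
    have epsp: "\<epsilon> > 0" unfolding \<epsilon>_def using dap dp etap by simp
    obtain x where x: "norm x = 1" "norm (Dop s t x - d *\<^sub>R x) < \<epsilon>" using ap epsp by blast
    define v where "v = Res (lam + s) x"
    define w where "w = Res (lam + t) (Res (lam + s) x)"
    have vD: "v \<in> D" and wD: "w \<in> D" and Lv: "L v - (lam + s) *\<^sub>R v = x"
      and Lw: "L w - (lam + t) *\<^sub>R w = v" and Dx: "Dop s t x = v + t *\<^sub>R w"
      using Dx_facts[OF a b, of x] unfolding v_def w_def by auto
    define z where "z = v + (t - r2) *\<^sub>R w"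
    have zD: "z \<in> D" unfolding z_def using vD wD Dadd Dscale by blast
    have Lv': "L v = x + (lam + s) *\<^sub>R v" using Lv by (simp add: algebra_simps)
    have Lw': "L w = v + (lam + t) *\<^sub>R w" using Lw by (simp add: algebra_simps)
    have Lz: "L z = L v + (t - r2) *\<^sub>R L w" unfolding z_def using Ladd[OF vD Dscale[OF wD]] Lscale[OF wD] by simp
    have c1: "(lam + s) + (t - r2) - (lam + r1) = - (1 / d)" using sum by simp
    have c2: "(t - r2) * (lam + t) - (lam + r1) * (t - r2) = - (t / d)"
    proof -
      have "(t - r2) * (lam + t) - (lam + r1) * (t - r2) = t * t - t * (r1 + r2) + r1 * r2"
        by (simp add: algebra_simps)
      also have "\<dots> = - (t / d)" unfolding sum prod using d0 by (simp add: field_simps)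
      finally show ?thesis .
    qed
    have "L z - (lam + r1) *\<^sub>R z = x + ((lam + s) + (t - r2) - (lam + r1)) *\<^sub>R v
        + ((t - r2) * (lam + t) - (lam + r1) * (t - r2)) *\<^sub>R w"
      unfolding Lz unfolding Lv' Lw' z_def by (simp add: algebra_simps)
    also have "\<dots> = x - (1 / d) *\<^sub>R (v + t *\<^sub>R w)" unfolding c1 c2 by (simp add: algebra_simps)
    also have "\<dots> = - (1 / d) *\<^sub>R (Dop s t x - d *\<^sub>R x)" unfolding Dx using d0 by (simp add: algebra_simps)
    finally have Lzeq: "L z - (lam + r1) *\<^sub>R z = - (1 / d) *\<^sub>R (Dop s t x - d *\<^sub>R x)" .
    have err1: "norm (L z - (lam + r1) *\<^sub>R z) < \<epsilon> / \<bar>d\<bar>"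
      unfolding Lzeq using x(2) dap by (simp add: divide_simps)
    have Lwz: "L w - (lam + r2) *\<^sub>R w = z" unfolding z_def using Lw' by (simp add: algebra_simps)
    have nd: "norm (d *\<^sub>R x) = \<bar>d\<bar>" using x(1) by simp
    have "\<bar>d\<bar> \<le> norm (Dop s t x) + norm (Dop s t x - d *\<^sub>R x)"
      using norm_triangle_ineq4[of "Dop s t x" "Dop s t x - d *\<^sub>R x"] unfolding nd[symmetric] by simp
    then have DN: "norm (v + t *\<^sub>R w) > \<bar>d\<bar> - \<epsilon>" using x(2) Dx by simp
    show ?thesis
    proof (cases "norm z \<ge> \<eta>")
      case True
      then have zn: "z \<noteq> 0" using etap by auto
      have "\<epsilon> / \<bar>d\<bar> \<le> \<delta> * \<eta> / 2" unfolding \<epsilon>_def using dap by (simp add: divide_simps min_def)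
      also have "\<dots> < \<delta> * norm z" using True dp etap by (simp add: divide_simps)
      finally have "norm (L z - (lam + r1) *\<^sub>R z) < \<delta> * norm z" using err1 by simp
      then have "P \<delta>" unfolding P_def using witness[OF zD zn] by blast
      then show ?thesis by simp
    next
      case False
      have "v + t *\<^sub>R w = z + r2 *\<^sub>R w" unfolding z_def by (simp add: algebra_simps)
      then have "norm (v + t *\<^sub>R w) \<le> norm z + \<bar>r2\<bar> * norm w" using norm_triangle_ineq[of z "r2 *\<^sub>R w"] by simp
      then have "\<bar>r2\<bar> * norm w > \<bar>d\<bar> - \<epsilon> - \<eta>" using DN False by simp
      moreover have "\<epsilon> \<le> \<bar>d\<bar> / 4" "\<eta> \<le> \<bar>d\<bar> / 4" unfolding \<epsilon>_def \<eta>_def by auto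
      ultimately have "\<bar>r2\<bar> * norm w > \<bar>d\<bar> / 2" by simp
      moreover have "\<bar>r2\<bar> * norm w \<le> R2 * norm w" unfolding R2_def by (simp add: mult_right_mono)
      ultimately have wbig: "R2 * norm w > \<bar>d\<bar> / 2" by simp
      then have wn: "w \<noteq> 0" using dap by auto
      have "norm z < \<eta>" using False by simp
      also have "\<eta> \<le> \<delta> * \<bar>d\<bar> / (4 * R2)" unfolding \<eta>_def by simp
      also have "\<dots> < \<delta> * norm w"
      proof -
        have "0 \<le> R2 * norm w" using R2p by simp
        then have "\<bar>d\<bar> < (4 * R2) * norm w" using wbig by (simp add: algebra_simps)
        moreover have "4 * R2 > 0" using R2p by simp
        ultimately have "\<bar>d\<bar> / (4 * R2) < norm w" using pos_divide_less_eq by (metis mult.commute)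
        then have "\<delta> * (\<bar>d\<bar> / (4 * R2)) < \<delta> * norm w" using dp by (rule mult_strict_left_mono)
        then show ?thesis by simp
      qed
      finally have "norm (L w - (lam + r2) *\<^sub>R w) < \<delta> * norm w" unfolding Lwz .
      then have "Q \<delta>" unfolding Q_def using witness[OF wD wn] by blast
      then show ?thesis by simp
    qed
  qed
  have "(\<forall>\<delta>>0. P \<delta>) \<or> (\<forall>\<delta>>0. Q \<delta>)"
  proof (rule mono_disj)
    show "P \<delta> \<or> Q \<delta>" if "\<delta> > 0" for \<delta> using PQ[OF that] .
    show "P e'" if "P e" "e \<le> e'" for e e' using that unfolding P_def by force
    show "Q e'" if "Q e" "e \<le> e'" for e e' using that unfolding Q_def by force
  qed
  then have "appr UNIV (lam + r1) \<or> appr UNIV (lam + r2)" unfolding appr_def P_def Q_def by blast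
  then show ?thesis using root r1n r2n by blast
qed


lemma complex_case:
  assumes a: "lam + s \<notin> op_spectrum D L" and b: "lam + t \<notin> op_spectrum D L"
    and d0: "d \<noteq> 0"
    and Dl: "d^2 * (s - t)^2 + 2 * d * (s + t) + 1 < 0"
  shows "\<not> (\<forall>\<epsilon>>0. \<exists>x. norm x = 1 \<and> norm (Dop s t x - d *\<^sub>R x) < \<epsilon>)"
proof
  assume ap: "\<forall>\<epsilon>>0. \<exists>x. norm x = 1 \<and> norm (Dop s t x - d *\<^sub>R x) < \<epsilon>"
  define \<Delta> where "\<Delta> = d^2 * (s - t)^2 + 2 * d * (s + t) + 1"
  define \<kappa> where "\<kappa> = - \<Delta> / (4 * d^2)"
  define c where "c = (1 - d * (t - s)) / (2 * d)"
  have d2: "d^2 > 0" using d0 by simp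
  have kp: "\<kappa> > 0" unfolding \<kappa>_def using Dl d2 unfolding \<Delta>_def by (simp add: divide_simps)
  have sk: "sqrt \<kappa> > 0" using kp by simp
  define K1 where "K1 = 1 / sqrt \<kappa> + \<bar>t + c\<bar> / \<kappa>"
  have K1p: "K1 \<ge> 0" unfolding K1_def using kp sk by simp
  have dap: "\<bar>d\<bar> > 0" using d0 by simp
  define \<epsilon> where "\<epsilon> = \<bar>d\<bar>^2 / (2 * (\<bar>d\<bar> + K1))"
  have den: "2 * (\<bar>d\<bar> + K1) > 0" using dap K1p by simp
  have epsp: "\<epsilon> > 0" unfolding \<epsilon>_def using dap den by simp
  obtain x where x: "norm x = 1" "norm (Dop s t x - d *\<^sub>R x) < \<epsilon>" using ap epsp by blast
  define v where "v = Res (lam + s) x"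
  define w where "w = Res (lam + t) (Res (lam + s) x)"
  have vD: "v \<in> D" and wD: "w \<in> D" and Lv: "L v - (lam + s) *\<^sub>R v = x"
    and Lw: "L w - (lam + t) *\<^sub>R w = v" and Dx: "Dop s t x = v + t *\<^sub>R w"
    using Dx_facts[OF a b, of x] unfolding v_def w_def by auto
  define E where "E = Dop s t x - d *\<^sub>R x"
  have Lw': "L w = v + (lam + t) *\<^sub>R w" using Lw by (simp add: algebra_simps)
  have xw: "inner x w = inner v v + (t - s) * inner v w"
  proof -
    have "inner x w = inner (L v) w - (lam + s) * inner v w" unfolding Lv[symmetric] by (simp add: inner_diff_left)
    also have "inner (L v) w = inner v (L w)" by (rule Lsym[OF vD wD])
    also have "\<dots> = inner v v + (lam + t) * inner v w" unfolding Lw' by (simp add: inner_add_right)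
    finally show ?thesis by (simp add: algebra_simps)
  qed
  have Ew: "inner E w = inner v w + t * inner w w - d * (inner v v + (t - s) * inner v w)"
    unfolding E_def Dx xw[symmetric] by (simp add: inner_add_left inner_diff_left)
  define Q where "Q = norm (v - c *\<^sub>R w)^2 + \<kappa> * norm w^2"
  have Qe: "Q = inner v v - 2 * c * inner v w + (c^2 + \<kappa>) * inner w w"
    unfolding Q_def norm_diff_sq by (simp add: power2_norm_eq_inner[symmetric] algebra_simps)
  have ck: "c^2 + \<kappa> = - t / d"
    unfolding c_def \<kappa>_def \<Delta>_def using d0 by (simp add: field_simps power2_eq_square)
  have dQ: "d * Q = - inner E w"
    unfolding Qe Ew ck unfolding c_def using d0 by (simp add: field_simps)
  have Q0: "Q \<ge> 0" unfolding Q_def using kp by simp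
  have "\<bar>d\<bar> * Q = \<bar>inner E w\<bar>" using dQ Q0 by (metis abs_minus_cancel abs_mult abs_of_nonneg)
  also have "\<dots> \<le> norm E * norm w" by (rule Cauchy_Schwarz_ineq2)
  also have "\<dots> \<le> \<epsilon> * norm w" using x(2) unfolding E_def by (simp add: mult_right_mono)
  finally have Qb: "Q \<le> (\<epsilon> / \<bar>d\<bar>) * norm w" using dap by (simp add: divide_simps mult.commute)
  define A where "A = \<epsilon> / \<bar>d\<bar>"
  have Ap: "A > 0" unfolding A_def using epsp dap by simp
  have "\<kappa> * norm w^2 \<le> A * norm w" using Qb zero_le_power2[of "norm (v - c *\<^sub>R w)"] unfolding Q_def A_def by linarith
  then have wb: "norm w \<le> A / \<kappa>"
  proof (cases "norm w = 0")
    case False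
    then have "norm w > 0" by simp
    then have "\<kappa> * norm w \<le> A" using \<open>\<kappa> * norm w^2 \<le> A * norm w\<close> by (simp add: power2_eq_square)
    then show ?thesis using kp by (simp add: divide_simps mult.commute)
  qed (use Ap kp in simp)
  have "\<kappa> * norm w^2 \<ge> 0" using kp by simp
  then have "norm (v - c *\<^sub>R w)^2 \<le> A * norm w" using Qb unfolding Q_def A_def by linarith
  also have "\<dots> \<le> A * (A / \<kappa>)" using wb Ap by (intro mult_left_mono) auto
  also have "\<dots> = (A / sqrt \<kappa>)^2" using kp by (simp add: power2_eq_square)
  finally have vb: "norm (v - c *\<^sub>R w) \<le> A / sqrt \<kappa>"
    using Ap sk by (meson divide_nonneg_pos less_le power2_le_imp_le)
  have vt: "v + t *\<^sub>R w = (v - c *\<^sub>R w) + (t + c) *\<^sub>R w" by (simp add: algebra_simps)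
  have "norm (v + t *\<^sub>R w) \<le> norm (v - c *\<^sub>R w) + \<bar>t + c\<bar> * norm w"
    unfolding vt using norm_triangle_ineq[of "v - c *\<^sub>R w" "(t + c) *\<^sub>R w"] by simp
  also have "\<dots> \<le> A / sqrt \<kappa> + \<bar>t + c\<bar> * (A / \<kappa>)" using vb wb by (intro add_mono mult_left_mono) auto
  also have "\<dots> = A * K1" unfolding K1_def by (simp add: algebra_simps)
  finally have up: "norm (v + t *\<^sub>R w) \<le> A * K1" .
  have nd: "norm (d *\<^sub>R x) = \<bar>d\<bar>" using x(1) by simp
  have "\<bar>d\<bar> \<le> norm (Dop s t x) + norm (Dop s t x - d *\<^sub>R x)"
    using norm_triangle_ineq4[of "Dop s t x" "Dop s t x - d *\<^sub>R x"] unfolding nd[symmetric] by simp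
  then have "\<bar>d\<bar> - \<epsilon> < A * K1" using x(2) up Dx by simp
  then have "\<bar>d\<bar> * \<bar>d\<bar> - \<epsilon> * \<bar>d\<bar> < \<epsilon> * K1"
    unfolding A_def using dap by (simp add: divide_simps algebra_simps)
  then have "\<bar>d\<bar>^2 < \<epsilon> * (\<bar>d\<bar> + K1)" by (simp add: algebra_simps power2_eq_square)
  also have "\<epsilon> * (\<bar>d\<bar> + K1) = \<bar>d\<bar>^2 / 2" unfolding \<epsilon>_def using den by (simp add: field_simps)
  finally show False using dap by simp
qed


lemma Dbound:
  assumes sp: "0 < s" "s \<le> ee / 2" and tp: "0 < t" "t \<le> ee / 2"
  shows "norm (Dop s t y) \<le> (4 / ee) * norm y"
proof -
  have eep: "ee > 0" using ee(1) .
  have a: "lam + s \<notin> op_spectrum D L" using ee_res[of "lam + s"] sp eep by simp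
  have b: "lam + t \<notin> op_spectrum D L" using ee_res[of "lam + t"] tp eep by simp
  obtain Ca where Ca: "\<forall>y. norm (Res (lam + s) y) \<le> Ca * norm y" using Res_bound[OF a] by blast
  obtain Cb where Cb: "Cb > 0" "\<forall>y. norm (Res (lam + t) y) \<le> Cb * norm y" using Res_bound[OF b] by blast
  have bd: "norm (Dop s t x) \<le> (Cb + s * (Cb * Ca)) * norm x" for x
  proof -
    have "norm (Dop s t x) \<le> norm (Res (lam + t) x) + s * norm (Res (lam + t) (Res (lam + s) x))"
      unfolding Dop_def using norm_triangle_ineq[of "Res (lam + t) x" "s *\<^sub>R Res (lam + t) (Res (lam + s) x)"] sp by simp
    also have "\<dots> \<le> Cb * norm x + s * (Cb * (Ca * norm x))"
      using Cb Ca sp by (intro add_mono mult_left_mono order_trans[OF spec[OF Cb(2)]]) auto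
    finally show ?thesis by (simp add: algebra_simps)
  qed
  have ext: "\<exists>M\<ge>0. (\<forall>x\<in>UNIV. norm (Dop s t x) \<le> M * norm x) \<and>
           (\<exists>d. \<bar>d\<bar> = M \<and> (\<forall>\<epsilon>>0. \<exists>x\<in>UNIV. norm x = 1 \<and> norm (Dop s t x - d *\<^sub>R x) < \<epsilon>))"
  proof (rule extremal)
    show "Dop s t (x + y) = Dop s t x + Dop s t y" for x y
      unfolding Dop_def using Res_add[OF a] Res_add[OF b] by (simp add: algebra_simps)
    show "Dop s t (c *\<^sub>R x) = c *\<^sub>R Dop s t x" for x c
      unfolding Dop_def using Res_scale[OF a] Res_scale[OF b] by (simp add: algebra_simps)
    show "inner (Dop s t x) y = inner x (Dop s t y)" for x y
    proof -
      have "inner (Dop s t x) y = inner (Res (lam + t) x) y + s * inner (Res (lam + t) (Res (lam + s) x)) y"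
        unfolding Dop_def by (simp add: inner_add_left)
      also have "\<dots> = inner x (Res (lam + t) y) + s * inner x (Res (lam + s) (Res (lam + t) y))"
        using Res_sym[OF a] Res_sym[OF b] by simp
      also have "Res (lam + s) (Res (lam + t) y) = Res (lam + t) (Res (lam + s) y)" by (rule Res_comm[OF a b])
      finally show ?thesis unfolding Dop_def by (simp add: inner_add_right)
    qed
    show "norm (Dop s t x) \<le> (Cb + s * (Cb * Ca)) * norm x" for x by (rule bd)
    show "\<exists>x\<in>(UNIV::'a set). norm x = 1" using phin by blast
  qed auto
  then obtain M d where M: "M \<ge> 0" "\<forall>x. norm (Dop s t x) \<le> M * norm x" "\<bar>d\<bar> = M"
    and ap: "\<forall>\<epsilon>>0. \<exists>x. norm x = 1 \<and> norm (Dop s t x - d *\<^sub>R x) < \<epsilon>" by auto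
  have "M \<le> 4 / ee"
  proof (rule ccontr)
    assume "\<not> M \<le> 4 / ee"
    then have Mb: "\<bar>d\<bar> > 4 / ee" using M(3) by simp
    then have d0: "d \<noteq> 0" using eep by (auto simp: divide_simps)
    show False
    proof (cases "d^2 * (s - t)^2 + 2 * d * (s + t) + 1 < 0")
      case True
      then show False using complex_case[OF a b d0 True] ap by blast
    next
      case False
      then obtain r where r: "r \<noteq> 0" "d * (r - s) * (r - t) = r" "appr UNIV (lam + r)"
        using real_case[OF a b sp(1) tp(1) d0 _ ap] by force
      have "lam + r \<in> op_spectrum D L" using appr_sp[OF r(3)] .
      then have rb: "\<bar>r\<bar> \<ge> ee" using ee_iso[of "lam + r"] r(1) by force
      have rs: "\<bar>r - s\<bar> \<ge> \<bar>r\<bar> / 2" using sp rb by linarith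
      have rt: "\<bar>r - t\<bar> \<ge> \<bar>r\<bar> / 2" using tp rb by linarith
      have "\<bar>d\<bar> * (\<bar>r\<bar> / 2) * (\<bar>r\<bar> / 2) \<le> \<bar>d\<bar> * \<bar>r - s\<bar> * \<bar>r - t\<bar>"
        using rs rt by (intro mult_mono) auto
      also have "\<dots> = \<bar>r\<bar>" using r(2) by (metis abs_mult)
      finally have h: "\<bar>d\<bar> * (\<bar>r\<bar> / 2) * (\<bar>r\<bar> / 2) \<le> \<bar>r\<bar>" .
      have "\<bar>d\<bar> * (\<bar>r\<bar> / 2) * (\<bar>r\<bar> / 2) = (\<bar>r\<bar> * (\<bar>d\<bar> * \<bar>r\<bar>)) / 4" by simp
      then have "\<bar>r\<bar> * (\<bar>d\<bar> * \<bar>r\<bar>) \<le> \<bar>r\<bar> * 4" using h by linarith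
      then have "\<bar>d\<bar> * \<bar>r\<bar> \<le> 4" using r(1) mult_le_cancel_left_pos[of "\<bar>r\<bar>"] by simp
      then have "\<bar>d\<bar> \<le> 4 / \<bar>r\<bar>" using r(1) by (simp add: field_simps)
      also have "\<dots> \<le> 4 / ee" using rb eep by (intro divide_left_mono) auto
      finally show False using Mb by simp
    qed
  qed
  then show ?thesis using M(2) order_trans mult_right_mono norm_ge_zero by metis
qed

end

context SAE
begin

lemma Pi_diff:
  assumes a: "lam + s \<notin> op_spectrum D L" and b: "lam + t \<notin> op_spectrum D L"
  shows "(- s) *\<^sub>R Res (lam + s) y - (- t) *\<^sub>R Res (lam + t) y = - (s - t) *\<^sub>R Dop s t y"
proof -
  define X where "X = Res (lam + t) (Res (lam + s) y)"
  have c: "Res (lam + s) (Res (lam + t) y) = X" unfolding X_def by (rule Res_comm[OF a b])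
  have h: "Res (lam + s) y - Res (lam + t) y = ((lam + s) - (lam + t)) *\<^sub>R Res (lam + s) (Res (lam + t) y)"
    by (rule Res_ident[OF a b])
  have h2: "Res (lam + s) y - Res (lam + t) y = (s - t) *\<^sub>R X" using h unfolding c by simp
  have e: "Res (lam + s) y = Res (lam + t) y + (s - t) *\<^sub>R X"
    using h2 by (simp only: diff_eq_eq add.commute)
  have d: "Dop s t y = Res (lam + t) y + s *\<^sub>R X" unfolding Dop_def X_def ..
  show ?thesis unfolding d e by (simp add: algebra_simps)
qed

lemma ResH_bound:
  assumes sp: "0 < s" "s \<le> ee / 2" and y: "y \<in> HY phi"
  shows "norm (Res (lam + s) y) \<le> (4 / ee) * norm y"
proof -
  have eep: "ee > 0" using ee(1) .
  define sk where "sk k = s * inverse (real (Suc k))" for k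
  have skp: "sk k > 0" "sk k \<le> s" for k unfolding sk_def using sp by (auto simp: field_simps)
  have skr: "lam + sk k \<notin> op_spectrum D L" for k
    using ee_res[of "lam + sk k"] skp[of k] sp eep by simp
  have sk0: "sk \<longlonglongrightarrow> 0" unfolding sk_def using tendsto_mult_right_zero[OF LIMSEQ_inverse_real_of_nat] by simp
  define K where "K = (4 / ee) * norm y"
  have Kp: "K \<ge> 0" unfolding K_def using eep by simp
  define p where "p k = (- sk k) *\<^sub>R Res (lam + sk k) y" for k
  have pdiff: "norm (p m - p n) \<le> K * \<bar>sk m - sk n\<bar>" for m n
  proof -
    have "p m - p n = - (sk m - sk n) *\<^sub>R Dop (sk m) (sk n) y" unfolding p_def by (rule Pi_diff[OF skr skr])
    then have "norm (p m - p n) = \<bar>sk m - sk n\<bar> * norm (Dop (sk m) (sk n) y)" by (simp add: abs_minus_commute)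
    also have "\<dots> \<le> \<bar>sk m - sk n\<bar> * K" unfolding K_def
    proof (intro mult_left_mono)
      have "sk m \<le> ee / 2" "sk n \<le> ee / 2" using skp(2)[of m] skp(2)[of n] sp(2) by linarith+
      then show "norm (Dop (sk m) (sk n) y) \<le> 4 / ee * norm y" using Dbound skp(1) by blast
    qed simp
    finally show ?thesis by (simp add: mult.commute)
  qed
  have "Cauchy p"
  proof (rule CauchyI)
    fix e :: real assume e: "e > 0"
    have "Cauchy sk" using LIMSEQ_imp_Cauchy[OF sk0] .
    then obtain M where M: "\<forall>m\<ge>M. \<forall>n\<ge>M. norm (sk m - sk n) < e / (K + 1)"
      using CauchyD[of sk "e / (K + 1)"] e Kp by auto
    have "norm (p m - p n) < e" if "m \<ge> M" "n \<ge> M" for m n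
    proof -
      have "norm (p m - p n) \<le> K * \<bar>sk m - sk n\<bar>" by (rule pdiff)
      also have "\<dots> \<le> K * (e / (K + 1))"
      proof (intro mult_left_mono)
        have "norm (sk m - sk n) < e / (K + 1)" using M that by blast
        then show "\<bar>sk m - sk n\<bar> \<le> e / (K + 1)" by simp
      qed (rule Kp)
      also have "\<dots> < e" using Kp e by (simp add: field_simps)
      finally show ?thesis .
    qed
    then show "\<exists>M. \<forall>m\<ge>M. \<forall>n\<ge>M. norm (p m - p n) < e" by blast
  qed
  then obtain pl where pl: "p \<longlonglongrightarrow> pl" using Cauchy_convergent_iff convergent_def by blast
  have pD: "p k \<in> D" for k unfolding p_def using Res_D[OF skr] Dscale by blast
  have pH: "p k \<in> HY phi" for k unfolding p_def using Res_HY[OF skr y] HYscale by blast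
  have Lp: "L (p k) = lam *\<^sub>R p k + sk k *\<^sub>R (p k - y)" for k
  proof -
    have r: "L (Res (lam + sk k) y) = y + (lam + sk k) *\<^sub>R Res (lam + sk k) y"
      using Res_eq[OF skr, of k y] by (simp add: algebra_simps)
    have "L (p k) = (- sk k) *\<^sub>R L (Res (lam + sk k) y)" unfolding p_def by (rule Lscale[OF Res_D[OF skr]])
    also have "\<dots> = (- sk k) *\<^sub>R (y + (lam + sk k) *\<^sub>R Res (lam + sk k) y)" by (simp only: r)
    also have "\<dots> = lam *\<^sub>R p k + sk k *\<^sub>R (p k - y)" unfolding p_def by (simp add: algebra_simps)
    finally show ?thesis .
  qed
  have "(\<lambda>k. lam *\<^sub>R p k + sk k *\<^sub>R (p k - y)) \<longlonglongrightarrow> lam *\<^sub>R pl + 0 *\<^sub>R (pl - y)"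
    by (intro tendsto_intros pl sk0)
  then have "(\<lambda>k. L (p k)) \<longlonglongrightarrow> lam *\<^sub>R pl" unfolding Lp by simp
  then have plD: "pl \<in> D" and Lpl: "L pl = lam *\<^sub>R pl" using closedL[OF pD pl] by auto
  obtain c where c: "pl = c *\<^sub>R phi" using ker[OF plD Lpl] by blast
  have "pl \<in> HY phi" using Lim_in_closed_set[OF HY_closed _ _ pl] pH by simp
  then have "c = 0" using c phii unfolding HY_def by simp
  then have pl0: "pl = 0" using c by simp
  have "(\<lambda>n. norm (p 0 - p n)) \<longlonglongrightarrow> norm (p 0 - pl)" by (intro tendsto_intros pl)
  moreover have "\<forall>n\<ge>0. norm (p 0 - p n) \<le> K * s"
  proof (intro allI impI)
    fix n :: nat
    have "\<bar>sk 0 - sk n\<bar> \<le> s" using skp[of 0] skp[of n] by (simp add: abs_le_iff)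
    then show "norm (p 0 - p n) \<le> K * s" using pdiff[of 0 n] Kp by (meson mult_left_mono order_trans)
  qed
  ultimately have "norm (p 0 - pl) \<le> K * s" by (rule Lim_bounded)
  then have "s * norm (Res (lam + s) y) \<le> K * s" unfolding pl0 p_def sk_def using sp by simp
  then have "s * norm (Res (lam + s) y) \<le> s * K" by (simp add: mult.commute)
  then show ?thesis unfolding K_def using sp(1) mult_le_cancel_left_pos by blast
qed

end

context SAE
begin

lemma witnessS:
  assumes "x \<in> D" "x \<in> S" "\<And>c y. y \<in> S \<Longrightarrow> c *\<^sub>R y \<in> S" "x \<noteq> 0" "norm (L x - \<mu> *\<^sub>R x) < \<delta> * norm x"
  shows "\<exists>u. u \<in> D \<and> u \<in> S \<and> norm u = 1 \<and> norm (L u - \<mu> *\<^sub>R u) < \<delta>"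
proof -
  let ?u = "(1 / norm x) *\<^sub>R x"
  have "L ?u - \<mu> *\<^sub>R ?u = (1 / norm x) *\<^sub>R (L x - \<mu> *\<^sub>R x)"
    using Lscale[OF assms(1)] by (simp add: algebra_simps)
  then have "norm (L ?u - \<mu> *\<^sub>R ?u) = norm (L x - \<mu> *\<^sub>R x) / norm x" by simp
  also have "\<dots> < \<delta>" using assms(4,5) by (simp add: divide_simps)
  finally show ?thesis using Dscale[OF assms(1)] assms(2,3,4) by (intro exI[of _ ?u]) simp
qed

lemma iso_H: "\<exists>\<gamma>>0. \<forall>u. u \<in> D \<longrightarrow> u \<in> HY phi \<longrightarrow> \<gamma> * norm u \<le> norm (L u - lam *\<^sub>R u)"
proof -
  have eep: "ee > 0" using ee(1) .
  define s where "s = ee / 8"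
  have sp: "0 < s" "s \<le> ee / 2" unfolding s_def using eep by auto
  have a: "lam + s \<notin> op_spectrum D L" using ee_res[of "lam + s"] sp eep by simp
  have "(ee / 8) * norm u \<le> norm (L u - lam *\<^sub>R u)" if u: "u \<in> D" "u \<in> HY phi" for u
  proof -
    define y where "y = L u - (lam + s) *\<^sub>R u"
    have yH: "y \<in> HY phi" unfolding y_def using L_HY[OF u] u(2) HYdiff HYscale by blast
    have "u = Res (lam + s) y" unfolding y_def using Res_inv[OF a u(1)] by simp
    then have n1: "norm u \<le> (4 / ee) * norm y" using ResH_bound[OF sp yH] by simp
    have "y = (L u - lam *\<^sub>R u) - s *\<^sub>R u" unfolding y_def by (simp add: algebra_simps)
    then have n2: "norm y \<le> norm (L u - lam *\<^sub>R u) + s * norm u"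
      using norm_triangle_ineq4[of "L u - lam *\<^sub>R u" "s *\<^sub>R u"] sp by simp
    have "norm u \<le> (4 / ee) * (norm (L u - lam *\<^sub>R u) + s * norm u)"
      using order_trans[OF n1 mult_left_mono[OF n2]] eep by simp
    then have "norm u \<le> (4 / ee) * norm (L u - lam *\<^sub>R u) + norm u / 2"
      unfolding s_def using eep by (simp add: algebra_simps)
    then have "norm u / 2 \<le> (4 / ee) * norm (L u - lam *\<^sub>R u)" by simp
    then show ?thesis using eep by (simp add: divide_simps algebra_simps)
  qed
  then show ?thesis using eep by (intro exI[of _ "ee / 8"]) auto
qed

lemma not_appr_lam: "\<not> appr (HY phi) lam"
proof
  assume ap: "appr (HY phi) lam"
  obtain \<gamma> where g: "\<gamma> > 0" "\<forall>u. u \<in> D \<longrightarrow> u \<in> HY phi \<longrightarrow> \<gamma> * norm u \<le> norm (L u - lam *\<^sub>R u)"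
    using iso_H by blast
  obtain x where x: "x \<in> D" "x \<in> HY phi" "norm x = 1" "norm (L x - lam *\<^sub>R x) < \<gamma>"
    using ap g(1) unfolding appr_def by blast
  show False using g(2) x by force
qed


lemma zero_res: assumes n0: "n \<ge> 0" and spn: "{-n..n} \<inter> op_spectrum D L = {lam}" and l0: "lam \<noteq> 0"
  shows "0 \<notin> op_spectrum D L"
proof
  assume "0 \<in> op_spectrum D L"
  then have "0 \<in> {-n..n} \<inter> op_spectrum D L" using n0 by simp
  then have "(0::real) \<in> {lam}" unfolding spn .
  then show False using l0 by simp
qed

lemma gamma0: assumes n0: "n \<ge> 0" and spn: "{-n..n} \<inter> op_spectrum D L = {lam}"
  shows "\<exists>\<gamma>>0. \<forall>u. u \<in> D \<longrightarrow> u \<in> HY phi \<longrightarrow> \<gamma> * norm u \<le> norm (L u)"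
proof (cases "lam = 0")
  case True
  then show ?thesis using iso_H by simp
next
  case False
  have z: "0 \<notin> op_spectrum D L" by (rule zero_res[OF n0 spn False])
  obtain C where C: "\<forall>u\<in>D. norm u \<le> C * norm (L u - 0 *\<^sub>R u)" using notsp(2)[OF z] by blast
  have "(1 / (\<bar>C\<bar> + 1)) * norm u \<le> norm (L u)" if "u \<in> D" for u
  proof -
    have "norm u \<le> C * norm (L u)" using C that by simp
    also have "\<dots> \<le> (\<bar>C\<bar> + 1) * norm (L u)" by (intro mult_right_mono) auto
    finally show ?thesis by (simp add: divide_simps mult.commute)
  qed
  then show ?thesis by (intro exI[of _ "1 / (\<bar>C\<bar> + 1)"]) auto
qed

lemma surjH: assumes n0: "n \<ge> 0" and spn: "{-n..n} \<inter> op_spectrum D L = {lam}" and y: "y \<in> HY phi"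
  shows "\<exists>u. u \<in> D \<and> u \<in> HY phi \<and> L u = y"
proof (cases "lam = 0")
  case False
  have z: "0 \<notin> op_spectrum D L" by (rule zero_res[OF n0 spn False])
  show ?thesis using Res_D[OF z] Res_HY[OF z y] Res_eq[OF z, of y] by auto
next
  case True
  obtain \<gamma> where g: "\<gamma> > 0" "\<forall>u. u \<in> D \<longrightarrow> u \<in> HY phi \<longrightarrow> \<gamma> * norm u \<le> norm (L u)"
    using gamma0[OF n0 spn] by blast
  have eep: "ee > 0" using ee(1) .
  define sk where "sk k = (ee / 2) * inverse (real (Suc k))" for k
  have skp: "sk k > 0" "sk k \<le> ee / 2" for k unfolding sk_def using eep by (auto simp: field_simps)
  have skr: "lam + sk k \<notin> op_spectrum D L" for k
    using ee_res[of "lam + sk k"] skp[of k] eep by simp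
  have sk0: "sk \<longlonglongrightarrow> 0" unfolding sk_def using tendsto_mult_right_zero[OF LIMSEQ_inverse_real_of_nat] by simp
  define K where "K = (4 / ee) * norm y"
  have Kp: "K \<ge> 0" unfolding K_def using eep by simp
  define u where "u k = Res (lam + sk k) y" for k
  have uD: "u k \<in> D" for k unfolding u_def using Res_D[OF skr] .
  have uH: "u k \<in> HY phi" for k unfolding u_def using Res_HY[OF skr y] .
  have ub: "norm (u k) \<le> K" for k unfolding u_def K_def using ResH_bound[OF skp y] .
  have Lu: "L (u k) = y + sk k *\<^sub>R u k" for k
    using Res_eq[OF skr, of k y] True unfolding u_def by (simp add: algebra_simps)
  have ud: "\<gamma> * norm (u m - u n) \<le> (sk m + sk n) * K" for m n
  proof -
    have "\<gamma> * norm (u m - u n) \<le> norm (L (u m - u n))"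
      using g(2) Ddiff[OF uD uD] HYdiff[OF uH uH] by blast
    also have "L (u m - u n) = sk m *\<^sub>R u m - sk n *\<^sub>R u n" unfolding Ldiff[OF uD uD] Lu by simp
    also have "norm \<dots> \<le> sk m * norm (u m) + sk n * norm (u n)"
      using norm_triangle_ineq4[of "sk m *\<^sub>R u m" "sk n *\<^sub>R u n"] skp(1)[of m] skp(1)[of n] by simp
    also have "\<dots> \<le> sk m * K + sk n * K" using ub skp by (intro add_mono mult_left_mono) (auto intro: less_imp_le)
    finally show ?thesis by (simp add: algebra_simps)
  qed
  have "Cauchy u"
  proof (rule CauchyI)
    fix e :: real assume e: "e > 0"
    define X where "X = e * \<gamma> / (2 * K + 1)"
    have Xp: "X > 0" unfolding X_def using e g(1) Kp by simp
    have "eventually (\<lambda>k. sk k < X) sequentially"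
      using order_tendstoD(2)[OF sk0 Xp] .
    then obtain M where M: "\<And>k. k \<ge> M \<Longrightarrow> sk k < X" unfolding eventually_sequentially by blast
    have "norm (u m - u n) < e" if "m \<ge> M" "n \<ge> M" for m n
    proof -
      have "(sk m + sk n) * K \<le> (2 * X) * K"
      proof (rule mult_right_mono)
        show "sk m + sk n \<le> 2 * X" using M[OF that(1)] M[OF that(2)] by linarith
      qed (rule Kp)
      also have "\<dots> < e * \<gamma>" unfolding X_def using e g(1) Kp by (simp add: field_simps)
      finally have "\<gamma> * norm (u m - u n) < \<gamma> * e" using ud[of m n] by (simp add: mult.commute)
      then show ?thesis using g(1) by simp
    qed
    then show "\<exists>M. \<forall>m\<ge>M. \<forall>n\<ge>M. norm (u m - u n) < e" by blast
  qed
  then obtain ul where ul: "u \<longlonglongrightarrow> ul" using Cauchy_convergent_iff convergent_def by blast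
  have "(\<lambda>k. y + sk k *\<^sub>R u k) \<longlonglongrightarrow> y + 0 *\<^sub>R ul" by (intro tendsto_intros ul sk0)
  then have "(\<lambda>k. L (u k)) \<longlonglongrightarrow> y" unfolding Lu by simp
  then have "ul \<in> D" "L ul = y" using closedL[OF uD ul] by auto
  moreover have "ul \<in> HY phi" using Lim_in_closed_set[OF HY_closed _ _ ul] uH by simp
  ultimately show ?thesis by blast
qed

end

context SAE
begin

lemma lower_bound: assumes n0: "n \<ge> 0" and spn: "{-n..n} \<inter> op_spectrum D L = {lam}"
  shows "\<exists>c>n. \<forall>u. u \<in> D \<longrightarrow> u \<in> HY phi \<longrightarrow> c * norm u \<le> norm (L u)"
proof (cases "\<exists>x\<in>HY phi. norm x = 1")
  case False
  have "u = 0" if "u \<in> HY phi" for u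
  proof (rule ccontr)
    assume "u \<noteq> 0"
    then have "(1 / norm u) *\<^sub>R u \<in> HY phi" "norm ((1 / norm u) *\<^sub>R u) = 1" using HYscale[OF that] by auto
    then show False using False by blast
  qed
  then have "(n + 1) * norm u \<le> norm (L u)" if "u \<in> HY phi" for u
  proof -
    have "u = 0" using that \<open>\<And>u. u \<in> HY phi \<Longrightarrow> u = 0\<close> by blast
    then show ?thesis by simp
  qed
  then show ?thesis by (intro exI[of _ "n + 1"]) auto
next
  case True
  obtain \<gamma> where g: "\<gamma> > 0" "\<forall>u. u \<in> D \<longrightarrow> u \<in> HY phi \<longrightarrow> \<gamma> * norm u \<le> norm (L u)"
    using gamma0[OF n0 spn] by blast
  have uniq: "u1 = u2" if "u1 \<in> D" "u1 \<in> HY phi" "u2 \<in> D" "u2 \<in> HY phi" "L u1 = L u2" for u1 u2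
  proof -
    have "\<gamma> * norm (u1 - u2) \<le> norm (L (u1 - u2))" using g(2) Ddiff HYdiff that by blast
    also have "L (u1 - u2) = 0" using Ldiff that by simp
    finally show ?thesis using g(1) by (simp add: mult_le_0_iff)
  qed
  define B where "B y = (THE u. u \<in> D \<and> u \<in> HY phi \<and> L u = y)" for y
  have ex1: "\<exists>!u. u \<in> D \<and> u \<in> HY phi \<and> L u = y" if "y \<in> HY phi" for y
    using surjH[OF n0 spn that] uniq by blast
  have Binv: "B y \<in> D \<and> B y \<in> HY phi \<and> L (B y) = y" if "y \<in> HY phi" for y
    using theI'[OF ex1[OF that]] unfolding B_def .
  have Buniq: "B y = u" if "u \<in> D" "u \<in> HY phi" "L u = y" for u y
    using uniq Binv that L_HY by metis
  have ext: "\<exists>M\<ge>0. (\<forall>x\<in>HY phi. norm (B x) \<le> M * norm x) \<and>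
           (\<exists>d. \<bar>d\<bar> = M \<and> (\<forall>\<epsilon>>0. \<exists>x\<in>HY phi. norm x = 1 \<and> norm (B x - d *\<^sub>R x) < \<epsilon>))"
  proof (rule extremal)
    show "x + y \<in> HY phi" if "x \<in> HY phi" "y \<in> HY phi" for x y using HYadd that .
    show "c *\<^sub>R x \<in> HY phi" if "x \<in> HY phi" for x c using HYscale that .
    show "B x \<in> HY phi" if "x \<in> HY phi" for x using Binv that by blast
    show "B (x + y) = B x + B y" if "x \<in> HY phi" "y \<in> HY phi" for x y
      using Buniq[of "B x + B y" "x + y"] Binv[OF that(1)] Binv[OF that(2)] Dadd HYadd Ladd by metis
    show "B (c *\<^sub>R x) = c *\<^sub>R B x" if "x \<in> HY phi" for x c
      using Buniq[of "c *\<^sub>R B x" "c *\<^sub>R x"] Binv[OF that] Dscale HYscale Lscale by metis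
    show "inner (B x) y = inner x (B y)" if "x \<in> HY phi" "y \<in> HY phi" for x y
    proof -
      have "inner (B x) y = inner (B x) (L (B y))" using Binv[OF that(2)] by simp
      also have "\<dots> = inner (L (B x)) (B y)" using Lsym Binv that by metis
      also have "\<dots> = inner x (B y)" using Binv[OF that(1)] by simp
      finally show ?thesis .
    qed
    show "norm (B x) \<le> (1 / \<gamma>) * norm x" if "x \<in> HY phi" for x
    proof -
      have "\<gamma> * norm (B x) \<le> norm x" using g(2) Binv[OF that] by metis
      then show ?thesis using g(1) by (simp add: divide_simps mult.commute)
    qed
    show "\<exists>x\<in>HY phi. norm x = 1" by (rule True)
  qed
  then obtain M d where M: "M \<ge> 0" "\<forall>x\<in>HY phi. norm (B x) \<le> M * norm x" "\<bar>d\<bar> = M"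
    and ap: "\<forall>\<epsilon>>0. \<exists>x\<in>HY phi. norm x = 1 \<and> norm (B x - d *\<^sub>R x) < \<epsilon>" by blast
  obtain x0 where x0: "x0 \<in> HY phi" "norm x0 = 1" using True by blast
  have "B x0 \<noteq> 0"
  proof
    assume "B x0 = 0"
    then have "x0 = L 0" using Binv[OF x0(1)] by simp
    then show False using x0(2) L0 by simp
  qed
  then have "0 < norm (B x0)" by simp
  also have "\<dots> \<le> M" using M(2) x0 by fastforce
  finally have Mp: "M > 0" .
  then have dap: "\<bar>d\<bar> > 0" using M(3) by simp
  have apr: "appr (HY phi) (1 / d)"
    unfolding appr_def
  proof (intro allI impI)
    fix \<delta> :: real assume dp: "\<delta> > 0"
    define \<epsilon> where "\<epsilon> = min (\<bar>d\<bar> / 2) (\<delta> * \<bar>d\<bar>^2 / 2)"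
    have epsp: "\<epsilon> > 0" unfolding \<epsilon>_def using dap dp by simp
    obtain x where x: "x \<in> HY phi" "norm x = 1" "norm (B x - d *\<^sub>R x) < \<epsilon>" using ap epsp by blast
    define u where "u = B x"
    have uD: "u \<in> D" "u \<in> HY phi" "L u = x" using Binv[OF x(1)] unfolding u_def by auto
    have "L u - (1 / d) *\<^sub>R u = - (1 / d) *\<^sub>R (B x - d *\<^sub>R x)" using uD(3) dap unfolding u_def
      by (simp add: algebra_simps)
    then have e1: "norm (L u - (1 / d) *\<^sub>R u) < \<epsilon> / \<bar>d\<bar>" using x(3) dap by (simp add: divide_simps)
    have nd: "norm (d *\<^sub>R x) = \<bar>d\<bar>" using x(2) by simp
    have "\<bar>d\<bar> \<le> norm (B x) + norm (B x - d *\<^sub>R x)"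
      using norm_triangle_ineq4[of "B x" "B x - d *\<^sub>R x"] unfolding nd[symmetric] by simp
    then have "norm u \<ge> \<bar>d\<bar> / 2" using x(3) unfolding u_def \<epsilon>_def by linarith
    then have un: "u \<noteq> 0" and "\<delta> * (\<bar>d\<bar> / 2) \<le> \<delta> * norm u" using dap dp by (auto intro: mult_left_mono)
    moreover have "\<epsilon> / \<bar>d\<bar> \<le> \<delta> * (\<bar>d\<bar> / 2)"
    proof -
      have "\<epsilon> \<le> \<delta> * \<bar>d\<bar>^2 / 2" unfolding \<epsilon>_def by simp
      then have "\<epsilon> / \<bar>d\<bar> \<le> (\<delta> * \<bar>d\<bar>^2 / 2) / \<bar>d\<bar>" using dap by (intro divide_right_mono) auto
      also have "\<dots> = \<delta> * (\<bar>d\<bar> / 2)" using dap by (simp add: power2_eq_square divide_simps)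
      finally show ?thesis .
    qed
    ultimately have "norm (L u - (1 / d) *\<^sub>R u) < \<delta> * norm u" using e1 by linarith
    then show "\<exists>x. x \<in> D \<and> x \<in> HY phi \<and> norm x = 1 \<and> norm (L x - (1 / d) *\<^sub>R x) < \<delta>"
      using witnessS[OF uD(1) uD(2) HYscale un] by blast
  qed
  have sp1: "1 / d \<in> op_spectrum D L" using appr_sp[OF apr] .
  have ne: "1 / d \<noteq> lam" using apr not_appr_lam by metis
  have "\<not> (\<bar>1 / d\<bar> \<le> n)"
  proof
    assume "\<bar>1 / d\<bar> \<le> n"
    then have "- n \<le> 1 / d" "1 / d \<le> n" unfolding abs_le_iff by linarith+
    then have "1 / d \<in> {-n..n} \<inter> op_spectrum D L" using sp1 by simp
    then have "1 / d \<in> {lam}" unfolding spn .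
    then show False using ne by simp
  qed
  then have cn: "1 / M > n" using M(3) by simp
  have "(1 / M) * norm u \<le> norm (L u)" if "u \<in> D" "u \<in> HY phi" for u
  proof -
    have "B (L u) = u" using Buniq that by blast
    then have "norm u \<le> M * norm (L u)" using M(2) L_HY[OF that] by metis
    then show ?thesis using Mp by (simp add: divide_simps mult.commute)
  qed
  then show ?thesis using cn by blast
qed

end

context SAE
begin

lemma PF_eq: assumes "w \<in> D" "w \<in> HY phi"
  shows "projH phi (L (w + t *\<^sub>R phi) - N (w + t *\<^sub>R phi)) = L w - projH phi (N (w + t *\<^sub>R phi))"
proof -
  have "L (w + t *\<^sub>R phi) = L w + (t * lam) *\<^sub>R phi"
    using Ladd[OF assms(1) Dscale[OF phiD]] Lscale[OF phiD] Lphi by simp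
  then show ?thesis using projH_diff projH_add projH_phi projH_id[OF L_HY[OF assms]] by simp
qed

lemma solve:
  assumes n0: "n \<ge> 0" and spn: "{-n..n} \<inter> op_spectrum D L = {lam}"
    and KH: "\<And>w. w \<in> D \<Longrightarrow> w \<in> HY phi \<Longrightarrow> K w \<in> HY phi"
    and Klip: "\<And>w1 w2. w1 \<in> D \<Longrightarrow> w1 \<in> HY phi \<Longrightarrow> w2 \<in> D \<Longrightarrow> w2 \<in> HY phi \<Longrightarrow>
                 norm (K w1 - K w2) \<le> n * norm (w1 - w2)"
    and z: "z \<in> HY phi"
  shows "\<exists>!w. w \<in> D \<and> w \<in> HY phi \<and> L w - K w = z"
proof -
  obtain c where c: "c > n" "\<forall>u. u \<in> D \<longrightarrow> u \<in> HY phi \<longrightarrow> c * norm u \<le> norm (L u)"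
    using lower_bound[OF n0 spn] by blast
  have cp: "c > 0" using c(1) n0 by simp
  define B where "B y = (SOME u. u \<in> D \<and> u \<in> HY phi \<and> L u = y)" for y
  have Binv: "B y \<in> D \<and> B y \<in> HY phi \<and> L (B y) = y" if "y \<in> HY phi" for y
    using someI_ex[OF surjH[OF n0 spn that]] unfolding B_def .
  define f where "f y = z + K (B y)" for y
  have "\<exists>!y\<in>HY phi. f y = y"
  proof (rule Banach_fix)
    show "complete (HY phi)" using HY_closed complete_eq_closed by blast
    show "HY phi \<noteq> {}" using HY0 by blast
    show "0 \<le> n / c" using n0 cp by simp
    show "n / c < 1" using c(1) cp by simp
    show "f ` HY phi \<subseteq> HY phi" unfolding f_def using HYadd z KH Binv by blast
    show "dist (f x) (f y) \<le> n / c * dist x y" if "x \<in> HY phi" "y \<in> HY phi" for x y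
    proof -
      have bx: "B x \<in> D" "B x \<in> HY phi" "L (B x) = x" and bY: "B y \<in> D" "B y \<in> HY phi" "L (B y) = y"
        using Binv that by auto
      have "c * norm (B x - B y) \<le> norm (L (B x - B y))" using c(2) Ddiff[OF bx(1) bY(1)] HYdiff[OF bx(2) bY(2)] by blast
      also have "L (B x - B y) = x - y" using Ldiff[OF bx(1) bY(1)] bx(3) bY(3) by simp
      finally have cb: "c * norm (B x - B y) \<le> norm (x - y)" .
      have "dist (f x) (f y) = norm (K (B x) - K (B y))" unfolding f_def dist_norm by simp
      also have "\<dots> \<le> n * norm (B x - B y)" using Klip bx bY by blast
      also have "\<dots> \<le> n * (norm (x - y) / c)" using cb cp n0 by (intro mult_left_mono) (auto simp: field_simps)
      finally show ?thesis by (simp add: dist_norm)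
    qed
  qed
  then obtain y where y: "y \<in> HY phi" "f y = y" by blast
  have ex: "B y \<in> D \<and> B y \<in> HY phi \<and> L (B y) - K (B y) = z" using Binv[OF y(1)] y(2) unfolding f_def
    by (metis add_diff_cancel_right')
  have un: "w1 = w2" if "w1 \<in> D \<and> w1 \<in> HY phi \<and> L w1 - K w1 = z" "w2 \<in> D \<and> w2 \<in> HY phi \<and> L w2 - K w2 = z" for w1 w2
  proof -
    have "c * norm (w1 - w2) \<le> norm (L (w1 - w2))" using c(2) Ddiff[of w1 w2] HYdiff[of w1 w2] that by blast
    also have "L (w1 - w2) = K w1 - K w2" using Ldiff[of w1 w2] that by (simp add: algebra_simps)
    also have "norm \<dots> \<le> n * norm (w1 - w2)" using Klip that by blast
    finally have "(c - n) * norm (w1 - w2) \<le> 0" by (simp add: algebra_simps)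
    then show ?thesis using c(1) by (simp add: mult_le_0_iff)
  qed
  show ?thesis using ex un by blast
qed


definition Nlip :: "('a \<Rightarrow> 'a) \<Rightarrow> real \<Rightarrow> bool" where
  "Nlip N n \<longleftrightarrow> (\<forall>t::real. \<forall>w1\<in>HY phi. \<forall>w2\<in>HY phi.
        norm (projH phi (N (w1 + t *\<^sub>R phi)) - projH phi (N (w2 + t *\<^sub>R phi))) \<le> n * norm (w1 - w2))"

lemma fiber_ex1:
  assumes n0: "n \<ge> 0" and spn: "{-n..n} \<inter> op_spectrum D L = {lam}" and NL: "Nlip N n" and z: "z \<in> HY phi"
  shows "\<exists>!w. w \<in> HX D phi \<and> projH phi (L (w + t *\<^sub>R phi) - N (w + t *\<^sub>R phi)) = z"
proof -
  have "\<exists>!w. w \<in> D \<and> w \<in> HY phi \<and> L w - projH phi (N (w + t *\<^sub>R phi)) = z"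
  proof (rule solve[OF n0 spn _ _ z])
    show "projH phi (N (w + t *\<^sub>R phi)) \<in> HY phi" for w by (rule projH_HY)
    show "norm (projH phi (N (w1 + t *\<^sub>R phi)) - projH phi (N (w2 + t *\<^sub>R phi))) \<le> n * norm (w1 - w2)"
      if "w1 \<in> HY phi" "w2 \<in> HY phi" for w1 w2 using NL that unfolding Nlip_def by blast
  qed
  moreover have "(w \<in> HX D phi \<and> projH phi (L (w + t *\<^sub>R phi) - N (w + t *\<^sub>R phi)) = z) \<longleftrightarrow>
      (w \<in> D \<and> w \<in> HY phi \<and> L w - projH phi (N (w + t *\<^sub>R phi)) = z)" for w
    using PF_eq[of w t N] unfolding HX_iff by auto
  ultimately show ?thesis by simp
qed

lemma fiber:
  assumes n0: "n \<ge> 0" and spn: "{-n..n} \<inter> op_spectrum D L = {lam}" and NL: "Nlip N n" and z: "z \<in> HY phi"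
  shows "fiber_w D L N phi z t \<in> D \<and> fiber_w D L N phi z t \<in> HY phi \<and>
         L (fiber_w D L N phi z t) - projH phi (N (fiber_w D L N phi z t + t *\<^sub>R phi)) = z"
proof -
  have "fiber_w D L N phi z t \<in> HX D phi \<and>
     projH phi (L (fiber_w D L N phi z t + t *\<^sub>R phi) - N (fiber_w D L N phi z t + t *\<^sub>R phi)) = z"
    unfolding fiber_w_def by (rule theI'[OF fiber_ex1[OF n0 spn NL z]])
  then show ?thesis using PF_eq unfolding HX_iff by auto
qed

lemma fiber_uniq:
  assumes n0: "n \<ge> 0" and spn: "{-n..n} \<inter> op_spectrum D L = {lam}" and NL: "Nlip N n" and z: "z \<in> HY phi"
    and w: "w \<in> D" "w \<in> HY phi" "projH phi (L (w + t *\<^sub>R phi) - N (w + t *\<^sub>R phi)) = z"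
  shows "fiber_w D L N phi z t = w"
  unfolding fiber_w_def using the1_equality[OF fiber_ex1[OF n0 spn NL z]] w unfolding HX_iff by blast

end

context SAE
begin

lemma core:
  assumes n0: "n \<ge> 0" and spn: "{-n..n} \<inter> op_spectrum D L = {lam}" and NL: "Nlip N n"
    and lim: "\<forall>u\<in>D. ((\<lambda>t::real. (1 / t) *\<^sub>R projH phi (N (t *\<^sub>R u))) \<longlongrightarrow> Ninf u) at_top"
  shows "\<exists>wp. wp \<in> D \<and> wp \<in> HY phi \<and>
     (\<forall>z\<in>HY phi. ((\<lambda>t. graph_norm L ((1 / t) *\<^sub>R fiber_w D L N phi z t - wp)) \<longlongrightarrow> 0) at_top) \<and>
     L wp - projH phi (Ninf (wp + phi)) = 0 \<and>
     (\<forall>w. w \<in> D \<longrightarrow> w \<in> HY phi \<longrightarrow> L w - projH phi (Ninf (w + phi)) = 0 \<longrightarrow> w = wp)"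
proof -
  obtain c where c: "c > n" "\<forall>u. u \<in> D \<longrightarrow> u \<in> HY phi \<longrightarrow> c * norm u \<le> norm (L u)"
    using lower_bound[OF n0 spn] by blast
  have NinfH: "Ninf u \<in> HY phi" if "u \<in> D" for u
  proof (rule Lim_in_closed_set[OF HY_closed])
    show "((\<lambda>t::real. (1 / t) *\<^sub>R projH phi (N (t *\<^sub>R u))) \<longlongrightarrow> Ninf u) at_top" using lim that by blast
    show "\<forall>\<^sub>F t in at_top. (1 / t) *\<^sub>R projH phi (N (t *\<^sub>R u)) \<in> HY phi"
      using HYscale[OF projH_HY] by simp
  qed simp
  have tlip: "norm ((1 / t) *\<^sub>R projH phi (N (t *\<^sub>R (w1 + phi))) - (1 / t) *\<^sub>R projH phi (N (t *\<^sub>R (w2 + phi))))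
      \<le> n * norm (w1 - w2)" if t: "t > 0" and w: "w1 \<in> HY phi" "w2 \<in> HY phi" for t w1 w2
  proof -
    have "norm (projH phi (N (t *\<^sub>R w1 + t *\<^sub>R phi)) - projH phi (N (t *\<^sub>R w2 + t *\<^sub>R phi)))
        \<le> n * norm (t *\<^sub>R w1 - t *\<^sub>R w2)" using NL HYscale w unfolding Nlip_def by blast
    also have "\<dots> = t * (n * norm (w1 - w2))" using t
      by (simp add: scaleR_diff_right[symmetric] del: scaleR_diff_right)
    finally have h: "norm (projH phi (N (t *\<^sub>R (w1 + phi))) - projH phi (N (t *\<^sub>R (w2 + phi))))
        \<le> t * (n * norm (w1 - w2))" by (simp add: scaleR_add_right)
    have "norm ((1 / t) *\<^sub>R projH phi (N (t *\<^sub>R (w1 + phi))) - (1 / t) *\<^sub>R projH phi (N (t *\<^sub>R (w2 + phi))))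
        = (1 / t) * norm (projH phi (N (t *\<^sub>R (w1 + phi))) - projH phi (N (t *\<^sub>R (w2 + phi))))"
      using t by (simp add: scaleR_diff_right[symmetric] del: scaleR_diff_right)
    also have "\<dots> \<le> (1 / t) * (t * (n * norm (w1 - w2)))" using h t by (intro mult_left_mono) auto
    also have "\<dots> = n * norm (w1 - w2)" using t by simp
    finally show ?thesis .
  qed
  have GL: "norm (Ninf (w1 + phi) - Ninf (w2 + phi)) \<le> n * norm (w1 - w2)"
    if w: "w1 \<in> D" "w1 \<in> HY phi" "w2 \<in> D" "w2 \<in> HY phi" for w1 w2
  proof (rule tendsto_upperbound)
    have u1: "w1 + phi \<in> D" and u2: "w2 + phi \<in> D" using Dadd phiD w by auto
    show "((\<lambda>t. norm ((1 / t) *\<^sub>R projH phi (N (t *\<^sub>R (w1 + phi))) - (1 / t) *\<^sub>R projH phi (N (t *\<^sub>R (w2 + phi)))))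
        \<longlongrightarrow> norm (Ninf (w1 + phi) - Ninf (w2 + phi))) at_top"
      using lim u1 u2 by (intro tendsto_intros) auto
    show "\<forall>\<^sub>F t in at_top. norm ((1 / t) *\<^sub>R projH phi (N (t *\<^sub>R (w1 + phi))) - (1 / t) *\<^sub>R projH phi (N (t *\<^sub>R (w2 + phi))))
        \<le> n * norm (w1 - w2)"
      using eventually_gt_at_top[of 0] by eventually_elim (use tlip w in auto)
  qed simp
  have PN: "projH phi (Ninf (w + phi)) = Ninf (w + phi)" if "w \<in> D" for w
    using projH_id[OF NinfH[OF Dadd[OF that phiD]]] .
  have ex1: "\<exists>!w. w \<in> D \<and> w \<in> HY phi \<and> L w - projH phi (Ninf (w + phi)) = 0"
  proof (rule solve[OF n0 spn _ _ HY0])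
    show "projH phi (Ninf (w + phi)) \<in> HY phi" for w by (rule projH_HY)
    show "norm (projH phi (Ninf (w1 + phi)) - projH phi (Ninf (w2 + phi))) \<le> n * norm (w1 - w2)"
      if "w1 \<in> D" "w1 \<in> HY phi" "w2 \<in> D" "w2 \<in> HY phi" for w1 w2
      using GL[OF that] PN that by simp
  qed
  then obtain wp where wp: "wp \<in> D" "wp \<in> HY phi" "L wp - projH phi (Ninf (wp + phi)) = 0" by blast
  have wpu: "\<forall>w. w \<in> D \<longrightarrow> w \<in> HY phi \<longrightarrow> L w - projH phi (Ninf (w + phi)) = 0 \<longrightarrow> w = wp"
    using ex1 wp by blast
  define g where "g = Ninf (wp + phi)"
  have Lwp: "L wp = g" using wp(3) PN[OF wp(1)] unfolding g_def by simp
  have limz: "((\<lambda>t. graph_norm L ((1 / t) *\<^sub>R fiber_w D L N phi z t - wp)) \<longlongrightarrow> 0) at_top" if z: "z \<in> HY phi" for z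
  proof -
    define r where "r t = (1 / t) *\<^sub>R z + ((1 / t) *\<^sub>R projH phi (N (t *\<^sub>R (wp + phi))) - g)" for t :: real
    define C' where "C' = (1 + n) / (c - n) + 1"
    have bound: "graph_norm L ((1 / t) *\<^sub>R fiber_w D L N phi z t - wp) \<le> C' * norm (r t)" if t: "t > 0" for t
    proof -
      define w where "w = fiber_w D L N phi z t"
      have w: "w \<in> D" "w \<in> HY phi" "L w - projH phi (N (w + t *\<^sub>R phi)) = z"
        using fiber[OF n0 spn NL z, of t] unfolding w_def by auto
      define v where "v = (1 / t) *\<^sub>R w"
      have vH: "v \<in> HY phi" unfolding v_def using HYscale w by blast
      define e where "e = v - wp"
      have eD: "e \<in> D" "e \<in> HY phi" unfolding e_def v_def using Ddiff Dscale HYdiff HYscale w wp by auto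
      have wv: "w = t *\<^sub>R v" unfolding v_def using t by simp
      have Le: "L e = (1 / t) *\<^sub>R L w - g" unfolding e_def v_def using Ldiff[OF Dscale[OF w(1)] wp(1)] Lscale[OF w(1)] Lwp by simp
      also have "L w = z + projH phi (N (w + t *\<^sub>R phi))" using w(3) by (simp add: algebra_simps)
      finally have "L e = ((1 / t) *\<^sub>R projH phi (N (t *\<^sub>R (v + phi))) - (1 / t) *\<^sub>R projH phi (N (t *\<^sub>R (wp + phi)))) + r t"
        unfolding r_def wv by (simp add: algebra_simps scaleR_add_right)
      then have "norm (L e) \<le> n * norm (v - wp) + norm (r t)"
        using norm_triangle_ineq[of "(1 / t) *\<^sub>R projH phi (N (t *\<^sub>R (v + phi))) - (1 / t) *\<^sub>R projH phi (N (t *\<^sub>R (wp + phi)))" "r t"]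
          tlip[OF t vH wp(2)] by simp
      then have Leb: "norm (L e) \<le> n * norm e + norm (r t)" unfolding e_def .
      have "c * norm e \<le> norm (L e)" using c(2) eD by blast
      then have "(c - n) * norm e \<le> norm (r t)" using Leb by (simp add: algebra_simps)
      then have eb: "norm e \<le> norm (r t) / (c - n)" using c(1) by (simp add: field_simps mult.commute)
      have Leb2: "norm (L e) \<le> n * (norm (r t) / (c - n)) + norm (r t)"
        using Leb eb n0 by (meson add_right_mono mult_left_mono order_trans)
      have "graph_norm L e \<le> norm e + norm (L e)" unfolding graph_norm_def
        using sqrt_sum_squares_le_sum_abs[of "norm e" "norm (L e)"] by simp
      also have "\<dots> \<le> norm (r t) / (c - n) + (n * (norm (r t) / (c - n)) + norm (r t))"
        using eb Leb2 by (rule add_mono)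
      also have "\<dots> = C' * norm (r t)" unfolding C'_def by (simp add: algebra_simps add_divide_distrib)
      finally show ?thesis unfolding e_def v_def w_def .
    qed
    have r0: "(r \<longlongrightarrow> 0) at_top"
    proof -
      have i0: "((\<lambda>t::real. 1 / t) \<longlongrightarrow> 0) at_top"
        using tendsto_inverse_0_at_top[OF filterlim_ident] by (simp add: divide_inverse)
      have wD: "wp + phi \<in> D" using Dadd wp(1) phiD by blast
      have "(r \<longlongrightarrow> 0 *\<^sub>R z + (g - g)) at_top" unfolding r_def g_def
        using lim wD by (intro tendsto_intros i0) auto
      then show ?thesis by simp
    qed
    have "((\<lambda>t. C' * norm (r t)) \<longlongrightarrow> C' * norm (0::'a)) at_top" by (intro tendsto_intros r0)
    then have c0: "((\<lambda>t. C' * norm (r t)) \<longlongrightarrow> 0) at_top" by simp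
    show ?thesis
    proof (rule Lim_null_comparison[OF _ c0])
      show "\<forall>\<^sub>F t in at_top. norm (graph_norm L ((1 / t) *\<^sub>R fiber_w D L N phi z t - wp)) \<le> C' * norm (r t)"
        using eventually_gt_at_top[of 0] by eventually_elim (use bound in \<open>auto simp: graph_norm_def\<close>)
    qed
  qed
  show ?thesis using wp wpu limz by blast
qed

end

theorem mainTheorem8:
  fixes D :: "'a::{real_inner,complete_space} set"
    and L N Ninf :: "'a \<Rightarrow> 'a" and lam :: real and phi :: 'a
  assumes "self_adjoint_op D L"
    and "simple_isolated_eigen D L lam phi"
    and "hyp_H D L N lam phi"
    and "\<forall>u\<in>D. ((\<lambda>t::real. (1 / t) *\<^sub>R projH phi (N (t *\<^sub>R u))) \<longlongrightarrow> Ninf u) at_top"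
  shows "\<exists>wp\<in>HX D phi. \<exists>wm\<in>HX D phi.
     (\<forall>z\<in>HY phi.
        ((\<lambda>t. graph_norm L ((1 / t) *\<^sub>R fiber_w D L N phi z t - wp)) \<longlongrightarrow> 0) at_top \<and>
        ((\<lambda>t. graph_norm L ((1 / t) *\<^sub>R fiber_w D L N phi z t - wm)) \<longlongrightarrow> 0) at_bot) \<and>
     L wp - projH phi (Ninf (wp + phi)) = 0 \<and>
     (\<forall>w\<in>HX D phi. L w - projH phi (Ninf (w + phi)) = 0 \<longrightarrow> w = wp) \<and>
     L wm + projH phi (Ninf (- wm - phi)) = 0 \<and>
     (\<forall>w\<in>HX D phi. L w + projH phi (Ninf (- w - phi)) = 0 \<longrightarrow> w = wm)"
proof -
  interpret SAE D L lam phi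
    using assms(1,2) by (unfold_locales) auto
  obtain n where n0: "n \<ge> 0"
    and lip: "\<forall>t::real. \<forall>w1\<in>HY phi. \<forall>w2\<in>HY phi.
        norm (projH phi (N (w1 + t *\<^sub>R phi)) - projH phi (N (w2 + t *\<^sub>R phi))) \<le> n * norm (w1 - w2)"
    and spn: "{-n..n} \<inter> op_spectrum D L = {lam}"
    using assms(3) unfolding hyp_H_def by blast
  have NL: "Nlip N n" unfolding Nlip_def using lip .
  obtain wp where wp: "wp \<in> D" "wp \<in> HY phi"
     "\<forall>z\<in>HY phi. ((\<lambda>t. graph_norm L ((1 / t) *\<^sub>R fiber_w D L N phi z t - wp)) \<longlongrightarrow> 0) at_top"
     "L wp - projH phi (Ninf (wp + phi)) = 0"
     "\<forall>w. w \<in> D \<longrightarrow> w \<in> HY phi \<longrightarrow> L w - projH phi (Ninf (w + phi)) = 0 \<longrightarrow> w = wp"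
    using core[OF n0 spn NL assms(4)] by blast
  define N' where "N' x = - N (- x)" for x
  define Ninf' where "Ninf' u = - Ninf (- u)" for u
  have NL': "Nlip N' n" unfolding Nlip_def
  proof (intro allI ballI)
    fix t :: real and w1 w2 assume w: "w1 \<in> HY phi" "w2 \<in> HY phi"
    have e: "- (w + t *\<^sub>R phi) = (- w) + (- t) *\<^sub>R phi" for w by simp
    have "norm (projH phi (N' (w1 + t *\<^sub>R phi)) - projH phi (N' (w2 + t *\<^sub>R phi)))
        = norm (projH phi (N ((- w1) + (- t) *\<^sub>R phi)) - projH phi (N ((- w2) + (- t) *\<^sub>R phi)))"
      unfolding N'_def e projH_neg by (simp add: norm_minus_commute)
    also have "\<dots> \<le> n * norm ((- w1) - (- w2))" using lip HYneg w by blast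
    also have "\<dots> = n * norm (w1 - w2)" by (simp add: norm_minus_commute)
    finally show "norm (projH phi (N' (w1 + t *\<^sub>R phi)) - projH phi (N' (w2 + t *\<^sub>R phi))) \<le> n * norm (w1 - w2)" .
  qed
  have lim': "\<forall>u\<in>D. ((\<lambda>t::real. (1 / t) *\<^sub>R projH phi (N' (t *\<^sub>R u))) \<longlongrightarrow> Ninf' u) at_top"
  proof
    fix u assume u: "u \<in> D"
    have "((\<lambda>t::real. (1 / t) *\<^sub>R projH phi (N (t *\<^sub>R (- u)))) \<longlongrightarrow> Ninf (- u)) at_top"
      using assms(4) Dneg[OF u] by blast
    then have "((\<lambda>t::real. - ((1 / t) *\<^sub>R projH phi (N (t *\<^sub>R (- u))))) \<longlongrightarrow> - Ninf (- u)) at_top"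
      by (rule tendsto_minus)
    then show "((\<lambda>t::real. (1 / t) *\<^sub>R projH phi (N' (t *\<^sub>R u))) \<longlongrightarrow> Ninf' u) at_top"
      unfolding N'_def Ninf'_def projH_neg by simp
  qed
  obtain wm where wm: "wm \<in> D" "wm \<in> HY phi"
     "\<forall>z\<in>HY phi. ((\<lambda>t. graph_norm L ((1 / t) *\<^sub>R fiber_w D L N' phi z t - wm)) \<longlongrightarrow> 0) at_top"
     "L wm - projH phi (Ninf' (wm + phi)) = 0"
     "\<forall>w. w \<in> D \<longrightarrow> w \<in> HY phi \<longrightarrow> L w - projH phi (Ninf' (w + phi)) = 0 \<longrightarrow> w = wm"
    using core[OF n0 spn NL' lim'] by blast
  have eqm: "L w - projH phi (Ninf' (w + phi)) = L w + projH phi (Ninf (- w - phi))" for w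
  proof -
    have h: "- (w + phi) = - w - phi" by simp
    show ?thesis unfolding Ninf'_def h projH_neg by simp
  qed
  have refl: "fiber_w D L N phi z (- s) = - fiber_w D L N' phi (- z) s" if z: "z \<in> HY phi" for z s
  proof (rule fiber_uniq[OF n0 spn NL z])
    let ?w' = "fiber_w D L N' phi (- z) s"
    have f': "?w' \<in> D" "?w' \<in> HY phi" "L ?w' - projH phi (N' (?w' + s *\<^sub>R phi)) = - z"
      using fiber[OF n0 spn NL' HYneg[OF z], of s] by auto
    show "- ?w' \<in> D" using Dneg f' by blast
    show "- ?w' \<in> HY phi" using HYneg f' by blast
    have e: "- ?w' + (- s) *\<^sub>R phi = - (?w' + s *\<^sub>R phi)" by simp
    have pD: "?w' + s *\<^sub>R phi \<in> D" using Dadd Dscale phiD f' by blast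
    have "projH phi (L (- ?w' + (- s) *\<^sub>R phi) - N (- ?w' + (- s) *\<^sub>R phi))
        = projH phi (- (L (?w' + s *\<^sub>R phi) - N' (?w' + s *\<^sub>R phi)))"
      unfolding e Lneg[OF pD] N'_def by simp
    also have "\<dots> = z" unfolding projH_neg PF_eq[OF f'(1,2)] f'(3) by simp
    finally show "projH phi (L (- ?w' + (- s) *\<^sub>R phi) - N (- ?w' + (- s) *\<^sub>R phi)) = z" .
  qed
  have bot: "((\<lambda>t. graph_norm L ((1 / t) *\<^sub>R fiber_w D L N phi z t - wm)) \<longlongrightarrow> 0) at_bot" if z: "z \<in> HY phi" for z
  proof -
    have "((\<lambda>t. graph_norm L ((1 / t) *\<^sub>R fiber_w D L N' phi (- z) t - wm)) \<longlongrightarrow> 0) at_top"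
      using wm(3) HYneg[OF z] by blast
    moreover have eq: "(\<lambda>s. graph_norm L ((1 / (- s)) *\<^sub>R fiber_w D L N phi z (- s) - wm))
        = (\<lambda>s. graph_norm L ((1 / s) *\<^sub>R fiber_w D L N' phi (- z) s - wm))"
    proof (rule ext)
      fix s :: real
      have "(1 / (- s)) *\<^sub>R fiber_w D L N phi z (- s) = (1 / s) *\<^sub>R fiber_w D L N' phi (- z) s"
        unfolding refl[OF z] by (simp add: divide_inverse)
      then show "graph_norm L ((1 / (- s)) *\<^sub>R fiber_w D L N phi z (- s) - wm)
        = graph_norm L ((1 / s) *\<^sub>R fiber_w D L N' phi (- z) s - wm)" by (simp only:)
    qed
    ultimately have "((\<lambda>s. graph_norm L ((1 / (- s)) *\<^sub>R fiber_w D L N phi z (- s) - wm)) \<longlongrightarrow> 0) at_top"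
      by (simp only:)
    then have h: "((\<lambda>s. (\<lambda>t. graph_norm L ((1 / t) *\<^sub>R fiber_w D L N phi z t - wm)) (- s)) \<longlongrightarrow> 0) at_top"
      by (simp only:)
    show ?thesis using filterlim_at_bot_mirror[of "\<lambda>t. graph_norm L ((1 / t) *\<^sub>R fiber_w D L N phi z t - wm)" "nhds 0"] h
      by (rule iffD2)
  qed
  have wpH: "wp \<in> HX D phi" using wp(1,2) unfolding HX_iff by (intro conjI)
  have wmH: "wm \<in> HX D phi" using wm(1,2) unfolding HX_iff by (intro conjI)
  have u1: "\<forall>w\<in>HX D phi. L w - projH phi (Ninf (w + phi)) = 0 \<longrightarrow> w = wp"
  proof (intro ballI impI)
    fix w assume "w \<in> HX D phi" "L w - projH phi (Ninf (w + phi)) = 0"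
    then show "w = wp" using wp(5) unfolding HX_iff by blast
  qed
  have u2: "\<forall>w\<in>HX D phi. L w + projH phi (Ninf (- w - phi)) = 0 \<longrightarrow> w = wm"
  proof (intro ballI impI)
    fix w assume w: "w \<in> HX D phi" "L w + projH phi (Ninf (- w - phi)) = 0"
    then have "L w - projH phi (Ninf' (w + phi)) = 0" by (simp only: eqm)
    then show "w = wm" using wm(5) w(1) unfolding HX_iff by blast
  qed
  have e2: "L wm + projH phi (Ninf (- wm - phi)) = 0" using wm(4) by (simp only: eqm)
  have lims: "\<forall>z\<in>HY phi.
        ((\<lambda>t. graph_norm L ((1 / t) *\<^sub>R fiber_w D L N phi z t - wp)) \<longlongrightarrow> 0) at_top \<and>
        ((\<lambda>t. graph_norm L ((1 / t) *\<^sub>R fiber_w D L N phi z t - wm)) \<longlongrightarrow> 0) at_bot"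
    using wp(3) bot by blast
  show ?thesis using wpH wmH lims wp(4) u1 e2 u2 by blast
qed


end
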